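(* Let $n\ge2$, $d_1,\dots,d_n\ge2$, and let $\rho$ be a fully separable state on $\mathbb{C}^{d_1}\otimes\cdots\otimes\mathbb{C}^{d_n}$ with correlation tensor $\mathcal T$ and canonical correlation tensor $\tilde{\mathcal T}$ (defined in the context), and with moments $\bar a_i$, $\bar b_i$ as defined in the context. Then \[ \bar a_2^2\le \bar a_3\prod_{k=1}^n\sqrt{\frac{d_k-1}{2d_k}},\qquad \bar b_2^2\le \bar b_3\prod_{k=1}^n\sqrt{\frac{d_k^2-d_k+2}{2d_k^2}} . \]
   Context: For $d\ge2$, $\lambda_1^{(d)},\dots,\lambda_{d^2-1}^{(d)}$ are traceless Hermitian generators of $\mathfrak{su}(d)$ with ${\rm Tr}(\lambda_i\lambda_j)=2\delta_{ij}$, and set $\lambda_0^{(d)}=I_d$. For a multi-index $\alpha=(\alpha_1,\dots,\alpha_n)$ with $\alpha_k\in\{0,1,\dots,d_k^2-1\}$, let $m(\alpha)$ be the number of $k$ with $\alpha_k\neq0$, and define $\tilde{\mathcal T}_{\alpha_1\cdots\alpha_n}=\frac{\prod_{k:\alpha_k\ne0}d_k}{2^{m(\alpha)}\prod_{k=1}^n d_k}{\rm Tr}\big(\rho\,\lambda_{\alpha_1}^{(d_1)}\otimes\cdots\otimes\lambda_{\alpha_n}^{(d_n)}\big)$ (so $\tilde{\mathcal T}_{0\cdots0}=1/\prod_k d_k$ and $\rho=\sum_\alpha\tilde{\mathcal T}_\alpha\lambda_{\alpha_1}^{(d_1)}\otimes\cdots\otimes\lambda_{\alpha_n}^{(d_n)}$).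 The canonical correlation tensor is $\tilde{\mathcal T}$ (indices $\alpha_k\in\{0,\dots,d_k^2-1\}$) and the correlation tensor $\mathcal T$ is its restriction to $\alpha_k\in\{1,\dots,d_k^2-1\}$ for all $k$, i.e. $\mathcal T_{\alpha_1\cdots\alpha_n}=2^{-n}{\rm Tr}(\rho\,\lambda_{\alpha_1}\otimes\cdots\otimes\lambda_{\alpha_n})$. The $k$-th unfolding $\mathcal X_k$ of an $n$-index tensor $\mathcal X$ is the matrix with row index the $k$-th index and column index running over all remaining indices. The moments are $\bar a_i=\max_{1\le k\le n}{\rm Tr}\big((\mathcal T_k\mathcal T_k^{\dagger})^{i/2}\big)$ and $\bar b_i=\max_{1\le k\le n}{\rm Tr}\big((\tilde{\mathcal T}_k\tilde{\mathcal T}_k^{\dagger})^{i/2}\big)$, i.e. $\bar a_i=\|\mathcal T\|_i^i$, $\bar b_i=\|\tilde{\mathcal T}\|_i^i$ where the Schatten-$p$ norm of a tensor is the maximum of the Schatten-$p$ norms of its unfoldings. A state is fully separable if it is a convex combination $\sum_ip_i\rho_i^{(1)}\otimes\cdots\otimes\rho_i^{(n)}$ of product states. *)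

theory Defs
  imports Complex_Main "Jordan_Normal_Form.Char_Poly"
begin

(* Operators on C^d are represented as functions nat => nat => complex,
   only the entries with indices < d being relevant. *)

definition hermitian_op :: "nat \<Rightarrow> (nat \<Rightarrow> nat \<Rightarrow> complex) \<Rightarrow> bool" where
  "hermitian_op d A \<longleftrightarrow> (\<forall>i<d. \<forall>j<d. A j i = cnj (A i j))"

definition op_trace :: "nat \<Rightarrow> (nat \<Rightarrow> nat \<Rightarrow> complex) \<Rightarrow> complex" where
  "op_trace d A = (\<Sum>i<d. A i i)"

definition op_mult :: "nat \<Rightarrow> (nat \<Rightarrow> nat \<Rightarrow> complex) \<Rightarrow> (nat \<Rightarrow> nat \<Rightarrow> complex)
    \<Rightarrow> (nat \<Rightarrow> nat \<Rightarrow> complex)" where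
  "op_mult d A B = (\<lambda>i j. \<Sum>l<d. A i l * B l j)"

definition density_op :: "nat \<Rightarrow> (nat \<Rightarrow> nat \<Rightarrow> complex) \<Rightarrow> bool" where
  "density_op d A \<longleftrightarrow> hermitian_op d A \<and>
     (\<forall>v :: nat \<Rightarrow> complex. let q = (\<Sum>i<d. \<Sum>j<d. cnj (v i) * A i j * v j)
                                  in Im q = 0 \<and> Re q \<ge> 0) \<and>
     op_trace d A = 1"

definition su_generators :: "nat \<Rightarrow> (nat \<Rightarrow> nat \<Rightarrow> nat \<Rightarrow> complex) \<Rightarrow> bool" where
  "su_generators d L \<longleftrightarrow>
     (\<forall>a\<in>{1..<d^2}. hermitian_op d (L a) \<and> op_trace d (L a) = 0) \<and>
     (\<forall>a\<in>{1..<d^2}. \<forall>b\<in>{1..<d^2}.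
         op_trace d (op_mult d (L a) (L b)) = (if a = b then 2 else 0))"

definition gen_ext :: "(nat \<Rightarrow> nat \<Rightarrow> nat \<Rightarrow> nat \<Rightarrow> complex) \<Rightarrow> nat \<Rightarrow> nat \<Rightarrow> nat \<Rightarrow> nat \<Rightarrow> complex" where
  "gen_ext L d a = (if a = 0 then (\<lambda>i j. if i = j then 1 else 0) else L d a)"

(* computational basis of C^{d_1} (x) ... (x) C^{d_n}: index lists (i_1,...,i_n), i_k < d_k
   (parties are numbered 0..n-1 here) *)
definition basis_idx :: "nat \<Rightarrow> (nat \<Rightarrow> nat) \<Rightarrow> nat list set" where
  "basis_idx n d = {xs. length xs = n \<and> (\<forall>k<n. xs ! k < d k)}"

definition fully_separable :: "nat \<Rightarrow> (nat \<Rightarrow> nat) \<Rightarrow> (nat list \<Rightarrow> nat list \<Rightarrow> complex) \<Rightarrow> bool" where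
  "fully_separable n d \<rho> \<longleftrightarrow>
     (\<exists>(m::nat) (p::nat \<Rightarrow> real) (\<sigma>::nat \<Rightarrow> nat \<Rightarrow> nat \<Rightarrow> nat \<Rightarrow> complex).
        (\<forall>i<m. p i \<ge> 0) \<and> (\<Sum>i<m. p i) = 1 \<and>
        (\<forall>i<m. \<forall>k<n. density_op (d k) (\<sigma> i k)) \<and>
        (\<forall>x\<in>basis_idx n d. \<forall>y\<in>basis_idx n d.
            \<rho> x y = (\<Sum>i<m. complex_of_real (p i) * (\<Prod>k<n. \<sigma> i k (x ! k) (y ! k)))))"

(* Tr(rho (lambda_{alpha_1} (x) ... (x) lambda_{alpha_n})) *)
definition corr_trace :: "nat \<Rightarrow> (nat \<Rightarrow> nat) \<Rightarrow> (nat \<Rightarrow> nat \<Rightarrow> nat \<Rightarrow> nat \<Rightarrow> complex)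
    \<Rightarrow> (nat list \<Rightarrow> nat list \<Rightarrow> complex) \<Rightarrow> nat list \<Rightarrow> complex" where
  "corr_trace n d L \<rho> \<alpha> =
     (\<Sum>x\<in>basis_idx n d. \<Sum>y\<in>basis_idx n d.
        \<rho> x y * (\<Prod>k<n. gen_ext L (d k) (\<alpha> ! k) (y ! k) (x ! k)))"

(* correlation tensor T_alpha = 2^{-n} Tr(rho lambda_{alpha_1} (x) ... (x) lambda_{alpha_n}),
   used for alpha_k in {1..d_k^2-1}; the trace is real for Hermitian rho *)
definition corr_tensor :: "nat \<Rightarrow> (nat \<Rightarrow> nat) \<Rightarrow> (nat \<Rightarrow> nat \<Rightarrow> nat \<Rightarrow> nat \<Rightarrow> complex)
    \<Rightarrow> (nat list \<Rightarrow> nat list \<Rightarrow> complex) \<Rightarrow> nat list \<Rightarrow> real" where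
  "corr_tensor n d L \<rho> \<alpha> = Re (corr_trace n d L \<rho> \<alpha>) / 2 ^ n"

definition can_corr_tensor :: "nat \<Rightarrow> (nat \<Rightarrow> nat) \<Rightarrow> (nat \<Rightarrow> nat \<Rightarrow> nat \<Rightarrow> nat \<Rightarrow> complex)
    \<Rightarrow> (nat list \<Rightarrow> nat list \<Rightarrow> complex) \<Rightarrow> nat list \<Rightarrow> real" where
  "can_corr_tensor n d L \<rho> \<alpha> =
     (let S = {k. k < n \<and> \<alpha> ! k \<noteq> 0} in
       (\<Prod>k\<in>S. real (d k)) / (2 ^ card S * (\<Prod>k<n. real (d k)))
         * Re (corr_trace n d L \<rho> \<alpha>))"

(* Gram matrix X_k X_k^T of the k-th unfolding X_k of a real n-index tensor X whose
   j-th index ranges over {lo..<d_j^2}; row r of the matrix corresponds to index value lo + r *)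
definition unfold_gram :: "nat \<Rightarrow> (nat \<Rightarrow> nat) \<Rightarrow> nat \<Rightarrow> (nat list \<Rightarrow> real) \<Rightarrow> nat \<Rightarrow> real mat" where
  "unfold_gram n d lo X k =
     (let R = {\<gamma>. length \<gamma> = n \<and> \<gamma> ! k = 0 \<and>
                   (\<forall>j<n. j \<noteq> k \<longrightarrow> lo \<le> \<gamma> ! j \<and> \<gamma> ! j < (d j)^2)}
      in mat ((d k)^2 - lo) ((d k)^2 - lo)
           (\<lambda>(r, s). \<Sum>\<gamma>\<in>R. X (\<gamma>[k := lo + r]) * X (\<gamma>[k := lo + s])))"

(* Tr(M^{p/2}) for a real symmetric positive semidefinite matrix M:
   sum of eigenvalues (with algebraic multiplicity) raised to the power p/2 *)
definition trace_pow_half :: "real mat \<Rightarrow> real \<Rightarrow> real" where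
  "trace_pow_half M p =
     (\<Sum>r\<in>{r. poly (char_poly M) r = 0}. real (order r (char_poly M)) * r powr (p / 2))"

definition tensor_moment :: "nat \<Rightarrow> (nat \<Rightarrow> nat) \<Rightarrow> nat \<Rightarrow> (nat list \<Rightarrow> real) \<Rightarrow> real \<Rightarrow> real" where
  "tensor_moment n d lo X p = Max ((\<lambda>k. trace_pow_half (unfold_gram n d lo X k) p) ` {..<n})"

end

theory Submission
  imports Defs "Jordan_Normal_Form.Schur_Decomposition"
begin

definition ipv :: "'b set \<Rightarrow> ('b \<Rightarrow> complex) \<Rightarrow> ('b \<Rightarrow> complex) \<Rightarrow> complex" where
  "ipv I u v = (\<Sum>x\<in>I. cnj (u x) * v x)"

lemma ipv_cnj: "ipv I v u = cnj (ipv I u v)"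
  unfolding ipv_def by (simp add: mult.commute)

lemma ipv_self_real: "Im (ipv I u u) = 0"
  unfolding ipv_def by (simp add: Im_sum)

lemma ipv_self_eq: "ipv I u u = complex_of_real (\<Sum>x\<in>I. (cmod (u x))^2)"
proof -
  have "\<And>x. cnj (u x) * u x = complex_of_real ((cmod (u x))^2)"
    by (metis complex_norm_square mult.commute of_real_power)
  thus ?thesis unfolding ipv_def of_real_sum by simp
qed

lemma ipv_self_nonneg: "Re (ipv I u u) \<ge> 0"
  unfolding ipv_self_eq by (simp add: sum_nonneg)

lemma ipv_self_zero: assumes "finite I" "ipv I u u = 0" "x \<in> I" shows "u x = 0"
proof -
  have "(\<Sum>x\<in>I. (cmod (u x))^2) = 0" using assms(2) unfolding ipv_self_eq of_real_eq_0_iff .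
  hence "\<forall>x\<in>I. (cmod (u x))^2 = 0" by (subst (asm) sum_nonneg_eq_0_iff[OF assms(1)]) auto
  hence "(cmod (u x))^2 = 0" using assms(3) by blast
  thus ?thesis by simp
qed

lemma ipv_sum_right: "ipv I u (\<lambda>x. \<Sum>i\<in>J. c i * v i x) = (\<Sum>i\<in>J. c i * ipv I u (v i))"
  unfolding ipv_def by (simp add: sum_distrib_left sum_distrib_right algebra_simps sum.swap[of _ I])

lemma ipv_sum_left: "ipv I (\<lambda>x. \<Sum>i\<in>J. c i * v i x) u = (\<Sum>i\<in>J. cnj (c i) * ipv I (v i) u)"
  unfolding ipv_def by (simp add: sum_distrib_left sum_distrib_right algebra_simps sum.swap[of _ I])

lemma ipv_cong: "(\<And>x. x \<in> I \<Longrightarrow> u x = u' x) \<Longrightarrow> (\<And>x. x \<in> I \<Longrightarrow> v x = v' x) \<Longrightarrow> ipv I u v = ipv I u' v'"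
  unfolding ipv_def by auto

definition inspan :: "nat \<Rightarrow> (nat \<Rightarrow> nat \<Rightarrow> complex) \<Rightarrow> nat \<Rightarrow> (nat \<Rightarrow> complex) \<Rightarrow> bool" where
  "inspan N F j v \<longleftrightarrow> (\<exists>c. \<forall>x<N. v x = (\<Sum>i<j. c i * F i x))"

lemma inspan_base: assumes "i < j" shows "inspan N F j (F i)"
  unfolding inspan_def
proof (rule exI[of _ "\<lambda>l. if l = i then 1 else 0"], intro allI impI)
  fix x assume "x < N"
  have "(\<Sum>l<j. (if l = i then 1 else 0) * F l x) = (\<Sum>l<j. if l = i then F i x else 0)"
    by (rule sum.cong, auto)
  also have "\<dots> = F i x" using assms by simp
  finally show "F i x = (\<Sum>l<j. (if l = i then 1 else 0) * F l x)" by simp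
qed

lemma inspan_mono: "inspan N F j v \<Longrightarrow> j \<le> j' \<Longrightarrow> inspan N F j' v"
  unfolding inspan_def
proof (elim exE)
  fix c assume c: "\<forall>x<N. v x = (\<Sum>i<j. c i * F i x)" and jj: "j \<le> j'"
  show "\<exists>c. \<forall>x<N. v x = (\<Sum>i<j'. c i * F i x)"
  proof (rule exI[of _ "\<lambda>i. if i < j then c i else 0"], intro allI impI)
    fix x assume "x < N"
    have "(\<Sum>i<j'. (if i < j then c i else 0) * F i x) = (\<Sum>i<j. (if i < j then c i else 0) * F i x)"
      by (rule sum.mono_neutral_right, insert jj, auto)
    thus "v x = (\<Sum>i<j'. (if i < j then c i else 0) * F i x)" using c \<open>x<N\<close> by simp
  qed
qed

lemma inspan_comb:
  assumes "finite L" "\<And>l. l \<in> L \<Longrightarrow> inspan N F j (g l)"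
  shows "inspan N F j (\<lambda>x. \<Sum>l\<in>L. a l * g l x)"
proof -
  from assms(2) have "\<forall>l\<in>L. \<exists>c. \<forall>x<N. g l x = (\<Sum>i<j. c i * F i x)" unfolding inspan_def by auto
  then obtain c where c: "\<And>l x. l \<in> L \<Longrightarrow> x < N \<Longrightarrow> g l x = (\<Sum>i<j. c l i * F i x)" by metis
  show ?thesis unfolding inspan_def
  proof (rule exI[of _ "\<lambda>i. \<Sum>l\<in>L. a l * c l i"], intro allI impI)
    fix x assume x: "x < N"
    have "(\<Sum>l\<in>L. a l * g l x) = (\<Sum>l\<in>L. a l * (\<Sum>i<j. c l i * F i x))" using c x by simp
    also have "\<dots> = (\<Sum>i<j. (\<Sum>l\<in>L. a l * c l i) * F i x)"
      by (simp add: sum_distrib_left sum_distrib_right mult.assoc sum.swap[of _ L])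
    finally show "(\<Sum>l\<in>L. a l * g l x) = (\<Sum>i<j. (\<Sum>l\<in>L. a l * c l i) * F i x)" .
  qed
qed

lemma inspan_trans:
  assumes "inspan N F j v" "\<And>i. i < j \<Longrightarrow> inspan N G k (F i)"
  shows "inspan N G k v"
proof -
  from assms(1) obtain c where c: "\<forall>x<N. v x = (\<Sum>i<j. c i * F i x)" unfolding inspan_def by auto
  have "inspan N G k (\<lambda>x. \<Sum>i\<in>{..<j}. c i * F i x)" by (rule inspan_comb, insert assms(2), auto)
  thus ?thesis using c unfolding inspan_def by auto
qed

lemma inspan_cong: "inspan N F j v \<Longrightarrow> (\<And>x. x < N \<Longrightarrow> v x = v' x) \<Longrightarrow> inspan N F j v'"
  unfolding inspan_def by auto


lemma ipv_diff_right: "ipv I u (\<lambda>x. f x - g x) = ipv I u f - ipv I u g"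
  unfolding ipv_def by (simp add: algebra_simps sum_subtractf)

lemma ipv_scale_right: "ipv I u (\<lambda>x. f x * a) = ipv I u f * a"
  unfolding ipv_def sum_distrib_right by (intro sum.cong refl) (simp add: algebra_simps)

lemma ipv_scale_left: "ipv I (\<lambda>x. f x * a) u = cnj a * ipv I f u"
  unfolding ipv_def sum_distrib_left by (intro sum.cong refl) (simp add: algebra_simps)

lemma inspan_lin: "inspan N F j v \<Longrightarrow> inspan N F j v' \<Longrightarrow> inspan N F j (\<lambda>x. a * v x + b * v' x)"
proof -
  assume "inspan N F j v" "inspan N F j v'"
  then obtain c c' where c: "\<forall>x<N. v x = (\<Sum>i<j. c i * F i x)" and c': "\<forall>x<N. v' x = (\<Sum>i<j. c' i * F i x)"
    unfolding inspan_def by blast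
  show ?thesis unfolding inspan_def
  proof (rule exI[of _ "\<lambda>i. a * c i + b * c' i"], intro allI impI)
    fix x assume "x < N"
    thus "a * v x + b * v' x = (\<Sum>i<j. (a * c i + b * c' i) * F i x)"
      using c c' by (simp add: sum_distrib_left distrib_right sum.distrib mult.assoc)
  qed
qed

function gsv :: "nat \<Rightarrow> (nat \<Rightarrow> nat \<Rightarrow> complex) \<Rightarrow> nat \<Rightarrow> nat \<Rightarrow> complex" where
  "gsv N p k = (let w = (\<lambda>x. p k x - (\<Sum>i<k. ipv {..<N} (gsv N p i) (p k) * gsv N p i x))
               in (\<lambda>x. w x / complex_of_real (sqrt (Re (ipv {..<N} w w)))))"
  by pat_completeness auto
termination by (relation "measure (\<lambda>(N,p,k). k)") auto

declare gsv.simps[simp del]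

definition gsw :: "nat \<Rightarrow> (nat \<Rightarrow> nat \<Rightarrow> complex) \<Rightarrow> nat \<Rightarrow> nat \<Rightarrow> complex" where
  "gsw N p k = (\<lambda>x. p k x - (\<Sum>i<k. ipv {..<N} (gsv N p i) (p k) * gsv N p i x))"

lemma gsv_eq: "gsv N p k = (\<lambda>x. gsw N p k x / complex_of_real (sqrt (Re (ipv {..<N} (gsw N p k) (gsw N p k)))))"
  by (subst gsv.simps, simp add: gsw_def Let_def)

lemma gram_schmidt_props:
  fixes P Q :: "complex mat"
  assumes P: "P \<in> carrier_mat N N" and Q: "Q \<in> carrier_mat N N" and QP: "Q * P = 1\<^sub>m N"
    and p_def: "p = (\<lambda>j x. P $$ (x, j))" and u_def: "u = gsv N p"
    and k: "k \<le> N"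
  shows "(\<forall>i<k. \<forall>j<k. ipv {..<N} (u i) (u j) = (if i = j then 1 else 0))
       \<and> (\<forall>i<k. inspan N p (Suc i) (u i)) \<and> (\<forall>i<k. inspan N u (Suc i) (p i))"
  using k
proof (induction k)
  case 0
  then show ?case by simp
next
  case (Suc k)
  hence kN: "k < N" by simp
  from Suc have IH: "\<forall>i<k. \<forall>j<k. ipv {..<N} (u i) (u j) = (if i = j then 1 else 0)"
    "\<forall>i<k. inspan N p (Suc i) (u i)" "\<forall>i<k. inspan N u (Suc i) (p i)" by auto
  define w where "w = gsw N p k"
  define c where "c = (\<lambda>i. ipv {..<N} (u i) (p k))"
  have w: "w = (\<lambda>x. p k x - (\<Sum>i<k. c i * u i x))" unfolding w_def gsw_def c_def u_def by simp
  have orth: "ipv {..<N} (u j) w = 0" if j: "j < k" for j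
  proof -
    have "ipv {..<N} (u j) w = c j - (\<Sum>i<k. c i * ipv {..<N} (u j) (u i))"
      unfolding w ipv_diff_right ipv_sum_right c_def by simp
    also have "(\<Sum>i<k. c i * ipv {..<N} (u j) (u i)) = (\<Sum>i<k. if i = j then c j else 0)"
      by (rule sum.cong, insert IH(1) j, auto)
    also have "\<dots> = c j" using j by simp
    finally show ?thesis by simp
  qed
  have nz: "ipv {..<N} w w \<noteq> 0"
  proof
    assume w0: "ipv {..<N} w w = 0"
    have "\<forall>x<N. w x = 0" using ipv_self_zero[OF _ w0] by auto
    hence "inspan N u k (p k)" unfolding inspan_def w by (intro exI[of _ c], auto)
    hence "inspan N p k (p k)"
      by (rule inspan_trans, insert IH(2), auto intro: inspan_mono)
    then obtain e where e: "\<forall>x<N. p k x = (\<Sum>l<k. e l * p l x)" unfolding inspan_def by auto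
    have "(Q * P) $$ (k, k) = (\<Sum>x<N. Q $$ (k, x) * P $$ (x, k))"
      using P Q kN by (simp add: scalar_prod_def times_mat_def lessThan_atLeast0)
    also have "\<dots> = (\<Sum>x<N. Q $$ (k, x) * (\<Sum>l<k. e l * P $$ (x, l)))"
      by (rule sum.cong, insert e, auto simp: p_def)
    also have "\<dots> = (\<Sum>l<k. e l * (\<Sum>x<N. Q $$ (k, x) * P $$ (x, l)))"
      by (simp add: sum_distrib_left sum.swap[of _ "{..<N}"] algebra_simps)
    also have "\<dots> = (\<Sum>l<k. e l * (Q * P) $$ (k, l))"
      by (rule sum.cong, insert P Q kN, auto simp: scalar_prod_def times_mat_def lessThan_atLeast0)
    also have "\<dots> = 0" using QP kN by (intro sum.neutral, auto)
    finally show False using QP kN by simp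
  qed
  define s where "s = sqrt (Re (ipv {..<N} w w))"
  have ww: "ipv {..<N} w w = complex_of_real (s^2)"
    unfolding s_def using ipv_self_nonneg[of "{..<N}" w] ipv_self_real[of "{..<N}" w]
    by (simp add: complex_eq_iff)
  have s0: "s \<noteq> 0" using nz ww by auto
  have uk: "u k = (\<lambda>x. w x * complex_of_real (1 / s))"
    unfolding u_def gsv_eq w_def[symmetric] s_def[symmetric] by (simp add: divide_inverse)
  have o1: "ipv {..<N} (u k) (u k) = 1"
    unfolding uk ipv_scale_left ipv_scale_right ww using s0
    by (simp add: power2_eq_square)
  have o2: "ipv {..<N} (u j) (u k) = 0" if "j < k" for j
    unfolding uk ipv_scale_right using orth[OF that] by simp
  have o3: "ipv {..<N} (u k) (u j) = 0" if "j < k" for j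
    using o2[OF that] ipv_cnj[of "{..<N}" "u k" "u j"] by simp
  have A: "\<forall>i<Suc k. \<forall>j<Suc k. ipv {..<N} (u i) (u j) = (if i = j then 1 else 0)"
  proof (intro allI impI)
    fix i j assume "i < Suc k" "j < Suc k"
    then consider "i < k" "j < k" | "i = k" "j < k" | "i < k" "j = k" | "i = k" "j = k" by linarith
    thus "ipv {..<N} (u i) (u j) = (if i = j then 1 else 0)"
      by (cases, insert IH(1) o1 o2 o3, auto)
  qed
  have sumspan: "inspan N F (Suc k) (\<lambda>x. \<Sum>i\<in>{..<k}. c i * u i x)" if "\<And>i. i < k \<Longrightarrow> inspan N F (Suc k) (u i)" for F
    by (rule inspan_comb, insert that, auto)
  have B: "inspan N p (Suc k) (u k)"
  proof -
    have "inspan N p (Suc k) (\<lambda>x. complex_of_real (1/s) * p k x + (- complex_of_real (1/s)) * (\<Sum>i\<in>{..<k}. c i * u i x))"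
      by (rule inspan_lin[OF inspan_base sumspan], insert IH(2), auto intro: inspan_mono)
    thus ?thesis by (rule inspan_cong, simp add: uk w algebra_simps)
  qed
  have C: "inspan N u (Suc k) (p k)"
  proof -
    have "inspan N u (Suc k) (\<lambda>x. complex_of_real s * u k x + 1 * (\<Sum>i\<in>{..<k}. c i * u i x))"
      by (rule inspan_lin[OF inspan_base sumspan], auto intro: inspan_base)
    thus ?thesis by (rule inspan_cong, simp add: uk w algebra_simps s0)
  qed
  show ?case using A B C IH(2,3) less_Suc_eq by auto
qed

definition mv :: "nat \<Rightarrow> complex mat \<Rightarrow> (nat \<Rightarrow> complex) \<Rightarrow> nat \<Rightarrow> complex" where
  "mv N A v = (\<lambda>x. \<Sum>y<N. A $$ (x, y) * v y)"

lemma mv_herm: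
  assumes herm: "\<forall>i<N. \<forall>j<N. A $$ (j,i) = cnj (A $$ (i,j))"
  shows "ipv {..<N} u (mv N A v) = ipv {..<N} (mv N A u) v"
proof -
  have "ipv {..<N} u (mv N A v) = (\<Sum>x<N. \<Sum>y<N. cnj (u x) * (A $$ (x, y) * v y))"
    by (simp only: ipv_def mv_def sum_distrib_left)
  also have "\<dots> = (\<Sum>y<N. \<Sum>x<N. cnj (u x) * (A $$ (x, y) * v y))"
    by (rule sum.swap[of "\<lambda>x y. cnj (u x) * (A $$ (x, y) * v y)"])
  also have "\<dots> = (\<Sum>y<N. \<Sum>x<N. cnj (A $$ (y, x) * u x) * v y)"
  proof (rule sum.cong[OF refl], rule sum.cong[OF refl])
    fix y x assume "x \<in> {..<N}" "y \<in> {..<N}"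
    hence "x < N" "y < N" by auto
    hence "A $$ (x, y) = cnj (A $$ (y, x))" using herm by blast
    thus "cnj (u x) * (A $$ (x, y) * v y) = cnj (A $$ (y, x) * u x) * v y" by simp
  qed
  also have "\<dots> = ipv {..<N} (mv N A u) v"
    by (simp only: ipv_def mv_def cnj_sum sum_distrib_right)
  finally show ?thesis .
qed

lemma mv_cong: "(\<And>y. y < N \<Longrightarrow> v y = v' y) \<Longrightarrow> mv N A v = mv N A v'"
  unfolding mv_def by auto

lemma spectral:
  fixes A :: "complex mat"
  assumes A: "A \<in> carrier_mat N N" and herm: "\<forall>i<N. \<forall>j<N. A $$ (j,i) = cnj (A $$ (i,j))"
  shows "\<exists>u \<nu>. (\<forall>i<N. \<forall>j<N. ipv {..<N} (u i) (u j) = (if i = j then 1 else 0))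
     \<and> (\<forall>j<N. \<forall>x<N. mv N A (u j) x = \<nu> j * u j x)
     \<and> char_poly A = (\<Prod>j\<leftarrow>[0..<N]. [:- \<nu> j, 1:])"
proof -
  obtain es where es: "char_poly A = (\<Prod>a\<leftarrow>es. [:- a, 1:])" using char_poly_factorized[OF A] by blast
  obtain B P Q where sd: "schur_decomposition A es = (B, P, Q)" by (cases "schur_decomposition A es", auto)
  from schur_decomposition[OF A es sd] have sw: "similar_mat_wit A B P Q" and ut: "upper_triangular B" by auto
  from sw A have B: "B \<in> carrier_mat N N" and P: "P \<in> carrier_mat N N" and Q: "Q \<in> carrier_mat N N"
    and PQ: "P * Q = 1\<^sub>m N" and QP: "Q * P = 1\<^sub>m N" and AeqPBQ: "A = P * B * Q"
    unfolding similar_mat_wit_def Let_def by auto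
  have AP: "A * P = P * B"
  proof -
    have "A * P = P * B * (Q * P)" unfolding AeqPBQ using P B Q by (simp add: assoc_mult_mat[of _ N N _ N _ N])
    also have "\<dots> = P * B" unfolding QP using P B by simp
    finally show ?thesis .
  qed
  define p where "p = (\<lambda>j x. P $$ (x, j))"
  define u where "u = gsv N p"
  from gram_schmidt_props[OF P Q QP p_def u_def order_refl]
  have on: "\<forall>i<N. \<forall>j<N. ipv {..<N} (u i) (u j) = (if i = j then 1 else 0)"
    and up: "\<forall>i<N. inspan N p (Suc i) (u i)" and pu: "\<forall>i<N. inspan N u (Suc i) (p i)" by auto
  have Ap: "inspan N p (Suc l) (mv N A (p l))" if l: "l < N" for l
    unfolding inspan_def
  proof (rule exI[of _ "\<lambda>i. B $$ (i, l)"], intro allI impI)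
    fix x assume x: "x < N"
    have "mv N A (p l) x = (A * P) $$ (x, l)"
      using A P x l by (simp add: mv_def p_def scalar_prod_def lessThan_atLeast0)
    also have "\<dots> = (P * B) $$ (x, l)" unfolding AP ..
    also have "\<dots> = (\<Sum>i<N. P $$ (x, i) * B $$ (i, l))"
      using B P x l by (simp add: scalar_prod_def lessThan_atLeast0)
    also have "\<dots> = (\<Sum>i<Suc l. P $$ (x, i) * B $$ (i, l))"
      by (rule sum.mono_neutral_right, insert l ut B, auto simp: upper_triangular_def)
    finally show "mv N A (p l) x = (\<Sum>i<Suc l. B $$ (i, l) * p i x)" by (simp add: p_def mult.commute)
  qed
  have Au: "inspan N u (Suc j) (mv N A (u j))" if j: "j < N" for j
  proof -
    from up j obtain c where c: "\<forall>x<N. u j x = (\<Sum>l<Suc j. c l * p l x)" unfolding inspan_def by blast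
    have eq: "mv N A (u j) x = (\<Sum>l\<in>{..<Suc j}. c l * mv N A (p l) x)" if "x < N" for x
    proof -
      have "mv N A (u j) x = (\<Sum>y<N. A $$ (x, y) * (\<Sum>l<Suc j. c l * p l y))"
        unfolding mv_def using c by (intro sum.cong refl, auto)
      also have "\<dots> = (\<Sum>l<Suc j. c l * mv N A (p l) x)"
        unfolding mv_def by (simp add: sum_distrib_left sum.swap[of _ "{..<N}"] algebra_simps)
      finally show ?thesis .
    qed
    have "inspan N u (Suc j) (\<lambda>x. \<Sum>l\<in>{..<Suc j}. c l * mv N A (p l) x)"
    proof (rule inspan_comb, simp)
      fix l assume "l \<in> {..<Suc j}"
      hence l: "l \<le> j" by auto
      have lN: "l < N" using l j by auto
      have "inspan N p (Suc j) (mv N A (p l))" by (rule inspan_mono[OF Ap[OF lN]]) (use l in auto)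
      thus "inspan N u (Suc j) (mv N A (p l))"
      proof (rule inspan_trans)
        fix i assume i: "i < Suc j" show "inspan N u (Suc j) (p i)" by (rule inspan_mono[of N u "Suc i"]) (use pu j i in auto)
      qed
    qed
    thus ?thesis by (rule inspan_cong, insert eq, auto)
  qed
  have low: "ipv {..<N} (u i) (mv N A (u j)) = 0" if "j < i" "i < N" for i j
  proof -
    from Au[of j] that obtain e where e: "\<forall>x<N. mv N A (u j) x = (\<Sum>l<Suc j. e l * u l x)"
      unfolding inspan_def by auto
    have "ipv {..<N} (u i) (mv N A (u j)) = ipv {..<N} (u i) (\<lambda>x. \<Sum>l\<in>{..<Suc j}. e l * u l x)"
      by (rule ipv_cong, insert e, auto)
    also have "\<dots> = (\<Sum>l\<in>{..<Suc j}. e l * ipv {..<N} (u i) (u l))" by (rule ipv_sum_right)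
    also have "\<dots> = 0" by (rule sum.neutral, insert on that, auto)
    finally show ?thesis .
  qed
  have offdiag: "ipv {..<N} (u i) (mv N A (u j)) = 0" if "i \<noteq> j" "i < N" "j < N" for i j
  proof (cases "j < i")
    case True thus ?thesis using low that by auto
  next
    case False
    hence "i < j" using that by auto
    have "ipv {..<N} (u i) (mv N A (u j)) = ipv {..<N} (mv N A (u i)) (u j)" by (rule mv_herm[OF herm])
    also have "\<dots> = cnj (ipv {..<N} (u j) (mv N A (u i)))" by (rule ipv_cnj)
    also have "\<dots> = 0" using low[OF \<open>i < j\<close>] that by simp
    finally show ?thesis .
  qed
  have expand: "v x = (\<Sum>i<N. ipv {..<N} (u i) v * u i x)" if x: "x < N" for v x
  proof -
    have "inspan N p N v" unfolding inspan_def
    proof (rule exI[of _ "\<lambda>l. \<Sum>y<N. Q $$ (l, y) * v y"], intro allI impI)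
      fix x assume x: "x < N"
      have "(\<Sum>y<N. (P * Q) $$ (x, y) * v y) = (\<Sum>y<N. if y = x then v x else 0)"
        unfolding PQ by (rule sum.cong) (use x in auto)
      hence "v x = (\<Sum>y<N. (P * Q) $$ (x, y) * v y)" using x by simp
      also have "\<dots> = (\<Sum>y<N. (\<Sum>l<N. P $$ (x, l) * Q $$ (l, y)) * v y)"
        by (rule sum.cong, insert x P Q, auto simp: scalar_prod_def lessThan_atLeast0)
      also have "\<dots> = (\<Sum>y<N. \<Sum>l<N. Q $$ (l, y) * v y * P $$ (x, l))"
        by (simp add: sum_distrib_right sum_distrib_left algebra_simps)
      also have "\<dots> = (\<Sum>l<N. \<Sum>y<N. Q $$ (l, y) * v y * P $$ (x, l))"
        by (rule sum.swap[of "\<lambda>y l. Q $$ (l, y) * v y * P $$ (x, l)"])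
      also have "\<dots> = (\<Sum>l<N. (\<Sum>y<N. Q $$ (l, y) * v y) * p l x)"
        by (simp add: sum_distrib_right p_def)
      finally show "v x = (\<Sum>l<N. (\<Sum>y<N. Q $$ (l, y) * v y) * p l x)" .
    qed
    hence "inspan N u N v"
    proof (rule inspan_trans)
      fix i assume i: "i < N" show "inspan N u N (p i)" by (rule inspan_mono[of N u "Suc i"]) (use pu i in auto)
    qed
    then obtain e where e: "\<forall>x<N. v x = (\<Sum>i<N. e i * u i x)" unfolding inspan_def by auto
    have coef: "ipv {..<N} (u i) v = e i" if "i < N" for i
    proof -
      have "ipv {..<N} (u i) v = ipv {..<N} (u i) (\<lambda>x. \<Sum>l\<in>{..<N}. e l * u l x)"
        by (rule ipv_cong, insert e, auto)
      also have "\<dots> = (\<Sum>l\<in>{..<N}. e l * ipv {..<N} (u i) (u l))" by (rule ipv_sum_right)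
      also have "\<dots> = (\<Sum>l\<in>{..<N}. if l = i then e i else 0)" by (rule sum.cong, insert on that, auto)
      also have "\<dots> = e i" using that by simp
      finally show ?thesis .
    qed
    show ?thesis using e x coef by auto
  qed
  define \<nu> where "\<nu> = (\<lambda>j. ipv {..<N} (u j) (mv N A (u j)))"
  have eig: "mv N A (u j) x = \<nu> j * u j x" if "j < N" "x < N" for j x
  proof -
    have "mv N A (u j) x = (\<Sum>i<N. ipv {..<N} (u i) (mv N A (u j)) * u i x)" by (rule expand, fact)
    also have "\<dots> = (\<Sum>i<N. if i = j then \<nu> j * u j x else 0)"
      by (rule sum.cong, insert offdiag that, auto simp: \<nu>_def)
    also have "\<dots> = \<nu> j * u j x" using that by simp
    finally show ?thesis .
  qed
  define U where "U = mat N N (\<lambda>(x, j). u j x)"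
  define Uh where "Uh = mat N N (\<lambda>(j, x). cnj (u j x))"
  define D where "D = mat N N (\<lambda>(i, j). if i = j then \<nu> i else 0)"
  have U: "U \<in> carrier_mat N N" and Uh: "Uh \<in> carrier_mat N N" and D: "D \<in> carrier_mat N N"
    unfolding U_def Uh_def D_def by auto
  have UhU: "Uh * U = 1\<^sub>m N"
  proof (rule eq_matI)
    fix i j assume ij: "i < dim_row (1\<^sub>m N)" "j < dim_col (1\<^sub>m N)"
    have "(Uh * U) $$ (i, j) = ipv {..<N} (u i) (u j)"
      using ij by (simp add: U_def Uh_def scalar_prod_def ipv_def lessThan_atLeast0)
    thus "(Uh * U) $$ (i, j) = 1\<^sub>m N $$ (i, j)" using on ij by auto
  qed (auto simp: U_def Uh_def)
  have UUh: "U * Uh = 1\<^sub>m N" by (rule mat_mult_left_right_inverse[OF Uh U UhU])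
  have AU: "A * U = U * D"
  proof (rule eq_matI)
    fix x j assume xj: "x < dim_row (U * D)" "j < dim_col (U * D)"
    hence xj': "x < N" "j < N" using U D by auto
    have "(A * U) $$ (x, j) = mv N A (u j) x"
      using xj' A by (simp add: U_def mv_def scalar_prod_def lessThan_atLeast0)
    also have "\<dots> = \<nu> j * u j x" by (rule eig[OF xj'(2,1)])
    also have "\<dots> = (\<Sum>i<N. if i = j then \<nu> j * u j x else 0)" using xj' by simp
    also have "\<dots> = (\<Sum>i<N. u i x * (if i = j then \<nu> i else 0))"
      by (rule sum.cong) auto
    also have "\<dots> = (U * D) $$ (x, j)"
      using xj' by (simp add: U_def D_def scalar_prod_def lessThan_atLeast0)
    finally show "(A * U) $$ (x, j) = (U * D) $$ (x, j)" .
  qed (insert A U D, auto)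
  have AUDU: "A = U * D * Uh"
  proof -
    have "A = A * (U * Uh)" unfolding UUh using A by simp
    also have "\<dots> = A * U * Uh" using A U Uh by (simp add: assoc_mult_mat[of _ N N _ N _ N])
    finally show ?thesis unfolding AU .
  qed
  have "similar_mat A D"
    unfolding similar_mat_def by (rule exI[of _ U], rule exI[of _ Uh], rule similar_mat_witI[OF UUh UhU AUDU A D U Uh])
  hence "char_poly A = char_poly D" by (rule char_poly_similar)
  also have "\<dots> = (\<Prod>a\<leftarrow>diag_mat D. [:- a, 1:])"
    by (rule char_poly_upper_triangular[OF D], auto simp: upper_triangular_def D_def)
  also have "diag_mat D = map \<nu> [0..<N]" unfolding diag_mat_def D_def by auto
  finally have cp: "char_poly A = (\<Prod>j\<leftarrow>[0..<N]. [:- \<nu> j, 1:])" by (simp add: comp_def)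
  show ?thesis using on eig cp by blast
qed

lemma cs_sq:
  fixes x y :: "'a \<Rightarrow> real"
  shows "(\<Sum>j\<in>J. x j * y j)^2 \<le> (\<Sum>j\<in>J. (x j)^2) * (\<Sum>j\<in>J. (y j)^2)"
proof (cases "(\<Sum>j\<in>J. (y j)^2) = 0")
  case True
  show ?thesis
  proof (cases "finite J")
    case fin: True
    have "\<forall>j\<in>J. (y j)^2 = 0" using True by (subst (asm) sum_nonneg_eq_0_iff[OF fin]) auto
    hence "\<forall>j\<in>J. x j * y j = 0" by auto
    hence "(\<Sum>j\<in>J. x j * y j) = 0" by simp
    thus ?thesis using True by simp
  next
    case False thus ?thesis by simp
  qed
next
  case False
  define B where "B = (\<Sum>j\<in>J. (y j)^2)"
  define S where "S = (\<Sum>j\<in>J. x j * y j)"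
  define A where "A = (\<Sum>j\<in>J. (x j)^2)"
  have Bpos: "B > 0" using False unfolding B_def by (metis less_eq_real_def sum_nonneg zero_le_power2)
  have "0 \<le> (\<Sum>j\<in>J. (x j * B - y j * S)^2)" by (simp add: sum_nonneg)
  also have "\<dots> = (\<Sum>j\<in>J. B^2 * (x j)^2 - 2*B*S*(x j * y j) + S^2 * (y j)^2)"
    by (rule sum.cong) (simp_all add: power2_eq_square algebra_simps)
  also have "\<dots> = B^2 * A - 2 * B * S * S + S^2 * B"
    by (simp only: sum.distrib sum_subtractf flip: sum_distrib_left) (simp add: A_def B_def S_def)
  also have "\<dots> = B * (B * A - S^2)" by (simp add: power2_eq_square algebra_simps)
  finally have "0 \<le> B * A - S^2" using Bpos by (simp add: zero_le_mult_iff)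
  thus ?thesis unfolding A_def B_def S_def by (simp add: mult.commute)
qed

lemma cs_sqrt:
  fixes x y :: "'a \<Rightarrow> real"
  shows "(\<Sum>j\<in>J. x j * y j) \<le> sqrt (\<Sum>j\<in>J. (x j)^2) * sqrt (\<Sum>j\<in>J. (y j)^2)"
proof -
  have "(\<Sum>j\<in>J. x j * y j) \<le> sqrt ((\<Sum>j\<in>J. x j * y j)^2)" by simp
  also have "\<dots> \<le> sqrt ((\<Sum>j\<in>J. (x j)^2) * (\<Sum>j\<in>J. (y j)^2))" by (rule real_sqrt_le_mono[OF cs_sq])
  finally show ?thesis by (simp add: real_sqrt_mult)
qed

lemma ipv_diff_left: "ipv I (\<lambda>x. f x - g x) u = ipv I f u - ipv I g u"
  unfolding ipv_def by (simp add: algebra_simps sum_subtractf)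

lemma bessel:
  assumes J: "finite J" and on: "\<forall>j\<in>J. \<forall>k\<in>J. ipv I (e j) (e k) = (if j = k then 1 else 0)"
  shows "(\<Sum>j\<in>J. (cmod (ipv I (e j) f))^2) \<le> Re (ipv I f f)"
proof -
  define c where "c = (\<lambda>j. ipv I (e j) f)"
  define S where "S = (\<lambda>x. \<Sum>j\<in>J. c j * e j x)"
  define g where "g = (\<lambda>x. f x - S x)"
  have Sf: "ipv I S f = (\<Sum>j\<in>J. cnj (c j) * c j)" unfolding S_def ipv_sum_left c_def ..
  have fS: "ipv I f S = (\<Sum>j\<in>J. c j * cnj (c j))" unfolding S_def ipv_sum_right c_def
    by (rule sum.cong, auto simp: ipv_cnj[of I f])
  have SS: "ipv I S S = (\<Sum>j\<in>J. cnj (c j) * c j)"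
  proof -
    have "ipv I S S = (\<Sum>j\<in>J. cnj (c j) * ipv I (e j) S)" unfolding S_def[of] ipv_sum_left by (simp add: S_def)
    also have "\<dots> = (\<Sum>j\<in>J. cnj (c j) * c j)"
    proof (rule sum.cong[OF refl])
      fix j assume j: "j \<in> J"
      have "ipv I (e j) S = (\<Sum>k\<in>J. c k * ipv I (e j) (e k))" unfolding S_def ipv_sum_right ..
      also have "\<dots> = (\<Sum>k\<in>J. if k = j then c j else 0)" by (rule sum.cong, insert on j, auto)
      also have "\<dots> = c j" using J j by simp
      finally show "cnj (c j) * ipv I (e j) S = cnj (c j) * c j" by simp
    qed
    finally show ?thesis .
  qed
  have "ipv I g g = ipv I f f - ipv I f S - ipv I S f + ipv I S S"
    unfolding g_def ipv_diff_left ipv_diff_right by simp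
  also have "\<dots> = ipv I f f - (\<Sum>j\<in>J. cnj (c j) * c j)" unfolding Sf fS SS by (simp add: mult.commute)
  also have "(\<Sum>j\<in>J. cnj (c j) * c j) = complex_of_real (\<Sum>j\<in>J. (cmod (c j))^2)"
    unfolding of_real_sum by (rule sum.cong[OF refl]) (metis complex_norm_square mult.commute of_real_power)
  finally have "Re (ipv I f f) - (\<Sum>j\<in>J. (cmod (c j))^2) = Re (ipv I g g)"
    by simp
  thus ?thesis using ipv_self_nonneg[of I g] unfolding c_def by linarith
qed

lemma count_list_sum: "sum_list (map (\<lambda>a. if a = r then 1 else 0) xs) = count_list xs r"
  by (induction xs) auto

lemma sum_list_count_real: "sum_list (map f xs) = (\<Sum>x\<in>set xs. real (count_list xs x) * (f x :: real))"
proof (induction xs)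
  case (Cons a xs)
  have "(\<Sum>x\<in>set (a#xs). real (count_list (a#xs) x) * f x)
      = (\<Sum>x\<in>insert a (set xs). (if x = a then f x else 0) + real (count_list xs x) * f x)"
    by (rule sum.cong) (auto simp: algebra_simps)
  also have "\<dots> = (\<Sum>x\<in>insert a (set xs). if x = a then f x else 0) + (\<Sum>x\<in>insert a (set xs). real (count_list xs x) * f x)"
    by (rule sum.distrib)
  also have "(\<Sum>x\<in>insert a (set xs). if x = a then f x else 0) = f a" by simp
  also have "(\<Sum>x\<in>insert a (set xs). real (count_list xs x) * f x) = (\<Sum>x\<in>set xs. real (count_list xs x) * f x)"
  proof (cases "a \<in> set xs")
    case True thus ?thesis by (simp add: insert_absorb)
  next
    case False
    hence "count_list xs a = 0" by (simp add: count_list_0_iff)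
    thus ?thesis using False by simp
  qed
  finally show ?case using Cons by simp
qed simp

lemma tph_eval:
  fixes M :: "real mat" and \<mu>s :: "real list"
  assumes cp: "char_poly M = (\<Prod>a\<leftarrow>\<mu>s. [:- a, 1:])"
  shows "trace_pow_half M q = sum_list (map (\<lambda>a. a powr (q / 2)) \<mu>s)"
proof -
  have roots: "{r. poly (char_poly M) r = 0} = set \<mu>s"
    unfolding cp poly_prod_list_zero_iff by auto
  have ord: "Polynomial.order r (char_poly M) = count_list \<mu>s r" for r
  proof -
    have "Polynomial.order r (char_poly M) = sum_list (map (Polynomial.order r) (map (\<lambda>a. [:- a, 1:]) \<mu>s))"
      unfolding cp by (rule order_prod_list, auto)
    also have "\<dots> = sum_list (map (\<lambda>a. if a = r then 1 else 0) \<mu>s)"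
      by (simp add: comp_def order_linear' cong: if_cong)
    also have "\<dots> = count_list \<mu>s r" by (rule count_list_sum)
    finally show ?thesis .
  qed
  show ?thesis unfolding trace_pow_half_def roots ord by (simp add: sum_list_count_real)
qed

interpretation ofr: map_poly_inj_idom_hom "of_real :: real \<Rightarrow> complex" by unfold_locales

lemma gram_key:
  fixes X :: "nat \<Rightarrow> 'b \<Rightarrow> real"
  assumes Gc: "\<And>r s. r < N \<Longrightarrow> s < N \<Longrightarrow> Gc $$ (r, s) = complex_of_real (\<Sum>\<gamma>\<in>R. X r \<gamma> * X s \<gamma>)"
  shows "ipv {..<N} ui (mv N Gc uj) = ipv R (\<lambda>\<gamma>. \<Sum>r<N. of_real (X r \<gamma>) * ui r) (\<lambda>\<gamma>. \<Sum>r<N. of_real (X r \<gamma>) * uj r)"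
proof -
  define f where "f = (\<lambda>r s \<gamma>. cnj (ui r) * of_real (X r \<gamma>) * (of_real (X s \<gamma>) * uj s))"
  have "ipv {..<N} ui (mv N Gc uj) = (\<Sum>r<N. \<Sum>s<N. \<Sum>\<gamma>\<in>R. f r s \<gamma>)"
    unfolding ipv_def mv_def
  proof (rule sum.cong[OF refl])
    fix r assume r: "r \<in> {..<N}"
    have "cnj (ui r) * (\<Sum>s<N. Gc $$ (r, s) * uj s) = (\<Sum>s<N. cnj (ui r) * (Gc $$ (r, s) * uj s))"
      by (rule sum_distrib_left)
    also have "\<dots> = (\<Sum>s<N. \<Sum>\<gamma>\<in>R. f r s \<gamma>)"
    proof (rule sum.cong[OF refl])
      fix s assume s: "s \<in> {..<N}"
      have g: "Gc $$ (r, s) = (\<Sum>\<gamma>\<in>R. of_real (X r \<gamma>) * of_real (X s \<gamma>))" using r s Gc by (simp add: of_real_sum)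
      show "cnj (ui r) * (Gc $$ (r, s) * uj s) = (\<Sum>\<gamma>\<in>R. f r s \<gamma>)"
        unfolding g f_def by (simp add: sum_distrib_left sum_distrib_right algebra_simps)
    qed
    finally show "cnj (ui r) * (\<Sum>s<N. Gc $$ (r, s) * uj s) = (\<Sum>s<N. \<Sum>\<gamma>\<in>R. f r s \<gamma>)" .
  qed
  also have "\<dots> = (\<Sum>r<N. \<Sum>\<gamma>\<in>R. \<Sum>s<N. f r s \<gamma>)"
    by (rule sum.cong[OF refl], rule sum.swap)
  also have "\<dots> = (\<Sum>\<gamma>\<in>R. \<Sum>r<N. \<Sum>s<N. f r s \<gamma>)"
    by (rule sum.swap)
  also have "\<dots> = ipv R (\<lambda>\<gamma>. \<Sum>r<N. of_real (X r \<gamma>) * ui r) (\<lambda>\<gamma>. \<Sum>r<N. of_real (X r \<gamma>) * uj r)"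
    unfolding ipv_def
  proof (rule sum.cong[OF refl])
    fix \<gamma>
    have "cnj (\<Sum>r<N. complex_of_real (X r \<gamma>) * ui r) * (\<Sum>s<N. complex_of_real (X s \<gamma>) * uj s)
        = (\<Sum>r<N. cnj (ui r) * of_real (X r \<gamma>)) * (\<Sum>s<N. complex_of_real (X s \<gamma>) * uj s)"
      by (simp add: cnj_sum mult.commute)
    also have "\<dots> = (\<Sum>r<N. \<Sum>s<N. f r s \<gamma>)" unfolding f_def by (rule sum_product)
    finally show "(\<Sum>r<N. \<Sum>s<N. f r s \<gamma>) = cnj (\<Sum>r<N. complex_of_real (X r \<gamma>) * ui r) * (\<Sum>s<N. complex_of_real (X s \<gamma>) * uj s)" by simp
  qed
  finally show ?thesis .
qed

lemma map_poly_linear_factors: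
  "map_poly (of_real :: real \<Rightarrow> complex) (\<Prod>a\<leftarrow>xs. [:- a, 1:]) = (\<Prod>a\<leftarrow>xs. [:- of_real a, 1:])"
  unfolding ofr.hom_prod_list by (simp add: comp_def)

lemma gram_spectral:
  fixes X :: "nat \<Rightarrow> 'b \<Rightarrow> real" and R :: "'b set" and G :: "real mat"
  assumes G: "G = mat N N (\<lambda>(r, s). \<Sum>\<gamma>\<in>R. X r \<gamma> * X s \<gamma>)"
  shows "\<exists>u \<mu>. (\<forall>i<N. \<forall>j<N. ipv {..<N} (u i) (u j) = (if i = j then 1 else 0)) \<and> (\<forall>j<N. \<mu> j \<ge> 0)
    \<and> (\<forall>i<N. \<forall>j<N. ipv R (\<lambda>\<gamma>. \<Sum>r<N. of_real (X r \<gamma>) * u i r) (\<lambda>\<gamma>. \<Sum>r<N. of_real (X r \<gamma>) * u j r)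
            = (if i = j then complex_of_real (\<mu> j) else 0))
    \<and> char_poly G = (\<Prod>j\<leftarrow>[0..<N]. [:- \<mu> j, 1:])"
proof -
  define Gc where "Gc = map_mat (of_real :: real \<Rightarrow> complex) G"
  have Gcar: "G \<in> carrier_mat N N" unfolding G by auto
  have Gccar: "Gc \<in> carrier_mat N N" unfolding Gc_def G by auto
  have Gc: "\<And>r s. r < N \<Longrightarrow> s < N \<Longrightarrow> Gc $$ (r, s) = complex_of_real (\<Sum>\<gamma>\<in>R. X r \<gamma> * X s \<gamma>)"
    unfolding Gc_def G by auto
  have herm: "\<forall>i<N. \<forall>j<N. Gc $$ (j,i) = cnj (Gc $$ (i,j))"
    by (auto simp: Gc mult.commute)
  from spectral[OF Gccar herm] obtain u \<nu> where
    on: "\<forall>i<N. \<forall>j<N. ipv {..<N} (u i) (u j) = (if i = j then 1 else 0)"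
    and eig: "\<forall>j<N. \<forall>x<N. mv N Gc (u j) x = \<nu> j * u j x"
    and cp: "char_poly Gc = (\<Prod>j\<leftarrow>[0..<N]. [:- \<nu> j, 1:])" by blast
  define w where "w = (\<lambda>i \<gamma>. \<Sum>r<N. of_real (X r \<gamma>) * u i r)"
  have ww: "ipv R (w i) (w j) = (if i = j then \<nu> j else 0)" if "i < N" "j < N" for i j
  proof -
    have "ipv R (w i) (w j) = ipv {..<N} (u i) (mv N Gc (u j))"
      unfolding w_def by (rule gram_key[OF Gc, symmetric])
    also have "\<dots> = ipv {..<N} (u i) (\<lambda>x. u j x * \<nu> j)"
      by (rule ipv_cong, insert eig that, auto simp: mult.commute)
    also have "\<dots> = ipv {..<N} (u i) (u j) * \<nu> j" by (rule ipv_scale_right)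
    finally show ?thesis using on that by auto
  qed
  define \<mu> where "\<mu> = (\<lambda>j. Re (\<nu> j))"
  have nu: "\<nu> j = complex_of_real (\<mu> j)" and mu0: "\<mu> j \<ge> 0" if "j < N" for j
  proof -
    have "\<nu> j = ipv R (w j) (w j)" using ww[OF that that] by simp
    thus "\<nu> j = complex_of_real (\<mu> j)" "\<mu> j \<ge> 0"
      unfolding \<mu>_def using ipv_self_real[of R "w j"] ipv_self_nonneg[of R "w j"] by (auto simp: complex_eq_iff)
  qed
  have "map_poly of_real (char_poly G) = char_poly Gc"
    unfolding Gc_def by (rule of_real_hom.char_poly_hom[OF Gcar, symmetric])
  also have "\<dots> = (\<Prod>j\<leftarrow>[0..<N]. [:- complex_of_real (\<mu> j), 1:])"
    unfolding cp by (rule arg_cong[where f = prod_list], rule map_cong, auto simp: nu)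
  also have "\<dots> = (\<Prod>a\<leftarrow>map \<mu> [0..<N]. [:- complex_of_real a, 1:])" by (simp add: comp_def)
  also have "\<dots> = map_poly of_real (\<Prod>a\<leftarrow>map \<mu> [0..<N]. [:- a, 1:])"
    by (rule map_poly_linear_factors[symmetric])
  finally have "char_poly G = (\<Prod>a\<leftarrow>map \<mu> [0..<N]. [:- a, 1:])" by (rule ofr.injectivity)
  hence cpG: "char_poly G = (\<Prod>j\<leftarrow>[0..<N]. [:- \<mu> j, 1:])" by (simp add: comp_def)
  show ?thesis
    by (rule exI[of _ u], rule exI[of _ \<mu>], insert on mu0 ww nu cpG, auto simp: w_def)
qed

lemma sum_list_upt_eq: "sum_list (map f [0..<N]) = (\<Sum>j<N. (f j :: real))"
  by (induction N) auto

lemma ipv_of_real_self: "Re (ipv I (\<lambda>r. complex_of_real (a r)) (\<lambda>r. complex_of_real (a r))) = (\<Sum>r\<in>I. (a r)^2)"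
  unfolding ipv_def by (simp add: Re_sum power2_eq_square)

lemma trace_norm_bound:
  fixes X :: "nat \<Rightarrow> 'b \<Rightarrow> real" and R :: "'b set"
  assumes R: "finite R"
   and on: "\<forall>i<N. \<forall>j<N. ipv {..<N} (u i) (u j) = (if i = j then 1 else 0)"
   and mu0: "\<forall>j<N. \<mu> j \<ge> 0"
   and ww: "\<forall>i<N. \<forall>j<N. ipv R (\<lambda>\<gamma>. \<Sum>r<N. of_real (X r \<gamma>) * u i r) (\<lambda>\<gamma>. \<Sum>r<N. of_real (X r \<gamma>) * u j r)
            = (if i = j then complex_of_real (\<mu> j) else 0)"
   and Xeq: "\<forall>r<N. \<forall>\<gamma>\<in>R. X r \<gamma> = (\<Sum>i<m. p i * a i r * b i \<gamma>)"
   and p0: "\<forall>i<m. p i \<ge> 0" and p1: "(\<Sum>i<m. p i) = 1"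
   and ab: "\<forall>i<m. sqrt (\<Sum>r<N. (a i r)^2) * sqrt (\<Sum>\<gamma>\<in>R. (b i \<gamma>)^2) \<le> C"
  shows "(\<Sum>j<N. sqrt (\<mu> j)) \<le> C"
proof -
  define w where "w = (\<lambda>i \<gamma>. \<Sum>r<N. of_real (X r \<gamma>) * u i r)"
  define J where "J = {j\<in>{..<N}. \<mu> j > 0}"
  have J: "finite J" "J \<subseteq> {..<N}" unfolding J_def by auto
  have sumJ: "(\<Sum>j<N. sqrt (\<mu> j)) = (\<Sum>j\<in>J. sqrt (\<mu> j))"
  proof (rule sum.mono_neutral_right)
    show "\<forall>i\<in>{..<N} - J. sqrt (\<mu> i) = 0"
    proof
      fix i assume "i \<in> {..<N} - J"
      hence "\<mu> i = 0" using mu0 unfolding J_def by force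
      thus "sqrt (\<mu> i) = 0" by simp
    qed
  qed (use J in auto)
  define e where "e = (\<lambda>j \<gamma>. w j \<gamma> * complex_of_real (1 / sqrt (\<mu> j)))"
  have e_on: "\<forall>j\<in>J. \<forall>k\<in>J. ipv R (e j) (e k) = (if j = k then 1 else 0)"
  proof (intro ballI)
    fix j k assume j: "j \<in> J" and k: "k \<in> J"
    hence jk: "j < N" "k < N" "\<mu> j > 0" "\<mu> k > 0" unfolding J_def by auto
    have eq1: "ipv R (e j) (e k) = cnj (complex_of_real (1 / sqrt (\<mu> j))) * ipv R (w j) (w k) * complex_of_real (1 / sqrt (\<mu> k))"
      unfolding e_def ipv_scale_left ipv_scale_right by (simp add: mult.assoc)
    have eq2: "ipv R (w j) (w k) = (if j = k then complex_of_real (\<mu> k) else 0)" using ww jk unfolding w_def by auto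
    show "ipv R (e j) (e k) = (if j = k then 1 else 0)"
    proof (cases "j = k")
      case True
      have "ipv R (e j) (e k) = complex_of_real (1 / sqrt (\<mu> k)) * complex_of_real (\<mu> k) * complex_of_real (1 / sqrt (\<mu> k))"
        unfolding eq1 eq2 using True by simp
      also have "\<dots> = complex_of_real ((1 / sqrt (\<mu> k)) * \<mu> k * (1 / sqrt (\<mu> k)))"
        by (simp only: of_real_mult)
      also have "(1 / sqrt (\<mu> k)) * \<mu> k * (1 / sqrt (\<mu> k)) = \<mu> k / (sqrt (\<mu> k) * sqrt (\<mu> k))"
        by simp
      also have "\<dots> = 1" using jk(4) by simp
      finally show ?thesis using True by simp
    next
      case False thus ?thesis unfolding eq1 eq2 by simp
    qed
  qed
  define \<alpha> where "\<alpha> = (\<lambda>i j. ipv {..<N} (u j) (\<lambda>r. complex_of_real (a i r)))"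
  define \<beta> where "\<beta> = (\<lambda>i j. ipv R (e j) (\<lambda>\<gamma>. complex_of_real (b i \<gamma>)))"
  have wexp: "w j \<gamma> = (\<Sum>i<m. (of_real (p i) * cnj (\<alpha> i j)) * of_real (b i \<gamma>))" if "\<gamma> \<in> R" for j \<gamma>
  proof -
    have "w j \<gamma> = (\<Sum>r<N. \<Sum>i<m. of_real (p i) * of_real (b i \<gamma>) * (u j r * of_real (a i r)))"
      unfolding w_def
    proof (rule sum.cong[OF refl])
      fix r assume "r \<in> {..<N}"
      hence "X r \<gamma> = (\<Sum>i<m. p i * a i r * b i \<gamma>)" using Xeq that by auto
      thus "complex_of_real (X r \<gamma>) * u j r = (\<Sum>i<m. of_real (p i) * of_real (b i \<gamma>) * (u j r * of_real (a i r)))"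
        by (simp add: of_real_sum sum_distrib_right sum_distrib_left algebra_simps)
    qed
    also have "\<dots> = (\<Sum>i<m. \<Sum>r<N. of_real (p i) * of_real (b i \<gamma>) * (u j r * of_real (a i r)))"
      by (rule sum.swap)
    also have "\<dots> = (\<Sum>i<m. (of_real (p i) * cnj (\<alpha> i j)) * of_real (b i \<gamma>))"
    proof (rule sum.cong[OF refl])
      fix i
      have "cnj (\<alpha> i j) = (\<Sum>r<N. u j r * of_real (a i r))" unfolding \<alpha>_def ipv_def by (simp add: cnj_sum)
      thus "(\<Sum>r<N. of_real (p i) * of_real (b i \<gamma>) * (u j r * of_real (a i r))) = of_real (p i) * cnj (\<alpha> i j) * of_real (b i \<gamma>)"
        by (simp add: sum_distrib_left algebra_simps)
    qed
    finally show ?thesis .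
  qed
  have sq: "sqrt (\<mu> j) \<le> (\<Sum>i<m. p i * (cmod (\<alpha> i j) * cmod (\<beta> i j)))" if j: "j \<in> J" for j
  proof -
    from j have jN: "j < N" and mpos: "\<mu> j > 0" unfolding J_def by auto
    have "ipv R (e j) (w j) = cnj (complex_of_real (1 / sqrt (\<mu> j))) * ipv R (w j) (w j)"
      unfolding e_def ipv_scale_left ..
    also have "ipv R (w j) (w j) = complex_of_real (\<mu> j)" using ww jN unfolding w_def by auto
    finally have "ipv R (e j) (w j) = complex_of_real (\<mu> j / sqrt (\<mu> j))" by simp
    also have "\<mu> j / sqrt (\<mu> j) = sqrt (\<mu> j)" using mpos by (simp add: real_div_sqrt)
    finally have ew: "ipv R (e j) (w j) = complex_of_real (sqrt (\<mu> j))" .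
    have "ipv R (e j) (w j) = ipv R (e j) (\<lambda>\<gamma>. \<Sum>i\<in>{..<m}. (of_real (p i) * cnj (\<alpha> i j)) * of_real (b i \<gamma>))"
      by (rule ipv_cong, insert wexp, auto)
    also have "\<dots> = (\<Sum>i\<in>{..<m}. (of_real (p i) * cnj (\<alpha> i j)) * \<beta> i j)"
      unfolding ipv_sum_right \<beta>_def ..
    finally have "sqrt (\<mu> j) = cmod (\<Sum>i<m. (of_real (p i) * cnj (\<alpha> i j)) * \<beta> i j)"
      using ew by (metis norm_of_real real_sqrt_ge_zero less_eq_real_def mpos abs_of_nonneg)
    also have "\<dots> \<le> (\<Sum>i<m. cmod ((of_real (p i) * cnj (\<alpha> i j)) * \<beta> i j))" by (rule norm_sum)
    also have "\<dots> = (\<Sum>i<m. p i * (cmod (\<alpha> i j) * cmod (\<beta> i j)))"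
      by (rule sum.cong[OF refl], insert p0, auto simp: norm_mult)
    finally show ?thesis .
  qed
  have inner: "(\<Sum>j\<in>J. cmod (\<alpha> i j) * cmod (\<beta> i j)) \<le> C" if i: "i < m" for i
  proof -
    have b1: "(\<Sum>j\<in>J. (cmod (\<alpha> i j))^2) \<le> (\<Sum>r<N. (a i r)^2)"
    proof -
      have "(\<Sum>j\<in>J. (cmod (\<alpha> i j))^2) \<le> Re (ipv {..<N} (\<lambda>r. complex_of_real (a i r)) (\<lambda>r. complex_of_real (a i r)))"
        unfolding \<alpha>_def
      proof (rule bessel[OF J(1)], intro ballI)
        fix j k assume "j \<in> J" "k \<in> J" hence "j < N" "k < N" using J(2) by auto
        thus "ipv {..<N} (u j) (u k) = (if j = k then 1 else 0)" using on by blast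
      qed
      thus ?thesis unfolding ipv_of_real_self .
    qed
    have b2: "(\<Sum>j\<in>J. (cmod (\<beta> i j))^2) \<le> (\<Sum>\<gamma>\<in>R. (b i \<gamma>)^2)"
    proof -
      have "(\<Sum>j\<in>J. (cmod (\<beta> i j))^2) \<le> Re (ipv R (\<lambda>\<gamma>. complex_of_real (b i \<gamma>)) (\<lambda>\<gamma>. complex_of_real (b i \<gamma>)))"
        unfolding \<beta>_def by (rule bessel[OF J(1) e_on])
      thus ?thesis unfolding ipv_of_real_self .
    qed
    have "(\<Sum>j\<in>J. cmod (\<alpha> i j) * cmod (\<beta> i j)) \<le> sqrt (\<Sum>j\<in>J. (cmod (\<alpha> i j))^2) * sqrt (\<Sum>j\<in>J. (cmod (\<beta> i j))^2)"
      by (rule cs_sqrt)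
    also have "\<dots> \<le> sqrt (\<Sum>r<N. (a i r)^2) * sqrt (\<Sum>\<gamma>\<in>R. (b i \<gamma>)^2)"
      by (rule mult_mono, insert b1 b2, auto intro: real_sqrt_le_mono sum_nonneg)
    also have "\<dots> \<le> C" using ab i by auto
    finally show ?thesis .
  qed
  have "(\<Sum>j<N. sqrt (\<mu> j)) \<le> (\<Sum>j\<in>J. \<Sum>i<m. p i * (cmod (\<alpha> i j) * cmod (\<beta> i j)))"
    unfolding sumJ by (rule sum_mono, rule sq)
  also have "\<dots> = (\<Sum>i<m. p i * (\<Sum>j\<in>J. cmod (\<alpha> i j) * cmod (\<beta> i j)))"
    by (subst sum.swap, simp add: sum_distrib_left)
  also have "\<dots> \<le> (\<Sum>i<m. p i * C)"
    by (rule sum_mono, rule mult_left_mono, insert inner p0, auto)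
  also have "\<dots> = C" using p1 by (simp add: sum_distrib_right[symmetric])
  finally show ?thesis .
qed

lemma matrix_main:
  fixes X :: "nat \<Rightarrow> 'b \<Rightarrow> real" and R :: "'b set" and G :: "real mat"
  assumes R: "finite R" and G: "G = mat N N (\<lambda>(r, s). \<Sum>\<gamma>\<in>R. X r \<gamma> * X s \<gamma>)"
   and Xeq: "\<forall>r<N. \<forall>\<gamma>\<in>R. X r \<gamma> = (\<Sum>i<m. p i * a i r * b i \<gamma>)"
   and p0: "\<forall>i<m. p i \<ge> 0" and p1: "(\<Sum>i<m. p i) = 1"
   and ab: "\<forall>i<m. sqrt (\<Sum>r<N. (a i r)^2) * sqrt (\<Sum>\<gamma>\<in>R. (b i \<gamma>)^2) \<le> C"
  shows "(trace_pow_half G 2)^2 \<le> trace_pow_half G 3 * C"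
proof -
  from gram_spectral[OF G] obtain u \<mu> where
    on: "\<forall>i<N. \<forall>j<N. ipv {..<N} (u i) (u j) = (if i = j then 1 else 0)" and mu0: "\<forall>j<N. \<mu> j \<ge> 0"
    and ww: "\<forall>i<N. \<forall>j<N. ipv R (\<lambda>\<gamma>. \<Sum>r<N. of_real (X r \<gamma>) * u i r) (\<lambda>\<gamma>. \<Sum>r<N. of_real (X r \<gamma>) * u j r)
            = (if i = j then complex_of_real (\<mu> j) else 0)"
    and cp: "char_poly G = (\<Prod>j\<leftarrow>[0..<N]. [:- \<mu> j, 1:])" by blast
  have cp': "char_poly G = (\<Prod>a\<leftarrow>map \<mu> [0..<N]. [:- a, 1:])" using cp by (simp add: comp_def)
  have tp: "trace_pow_half G q = (\<Sum>j<N. \<mu> j powr (q / 2))" for q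
    unfolding tph_eval[OF cp'] map_map comp_def by (rule sum_list_upt_eq)
  have TN: "(\<Sum>j<N. sqrt (\<mu> j)) \<le> C" by (rule trace_norm_bound[OF R on mu0 ww Xeq p0 p1 ab])
  have tp2: "trace_pow_half G 2 = (\<Sum>j<N. \<mu> j)"
    unfolding tp by (rule sum.cong, insert mu0, auto)
  define S3 where "S3 = (\<Sum>j<N. \<mu> j powr (3 / 2))"
  have tp3: "trace_pow_half G 3 = S3" unfolding tp S3_def by simp
  have S3nn: "S3 \<ge> 0" unfolding S3_def by (rule sum_nonneg, simp)
  have pw1: "\<mu> j = \<mu> j powr (3/4) * \<mu> j powr (1/4)" if "j < N" for j
  proof -
    have "\<mu> j powr (3/4) * \<mu> j powr (1/4) = \<mu> j powr (3/4 + 1/4)" by (rule powr_add[symmetric])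
    also have "\<dots> = \<mu> j" using mu0 that by simp
    finally show ?thesis by simp
  qed
  have pw2: "(\<mu> j powr (3/4))^2 = \<mu> j powr (3/2)" for j
  proof -
    have "(\<mu> j powr (3/4))^2 = \<mu> j powr (3/4 + 3/4)" unfolding power2_eq_square by (rule powr_add[symmetric])
    thus ?thesis by simp
  qed
  have pw3: "(\<mu> j powr (1/4))^2 = sqrt (\<mu> j)" if "j < N" for j
  proof -
    have "(\<mu> j powr (1/4))^2 = \<mu> j powr (1/4 + 1/4)" unfolding power2_eq_square by (rule powr_add[symmetric])
    also have "\<dots> = \<mu> j powr (1/2)" by simp
    also have "\<dots> = sqrt (\<mu> j)" using mu0 that by (simp add: powr_half_sqrt)
    finally show ?thesis .
  qed
  have "(trace_pow_half G 2)^2 = (\<Sum>j<N. \<mu> j powr (3/4) * \<mu> j powr (1/4))^2"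
    unfolding tp2 using pw1 by (metis (no_types, lifting) lessThan_iff sum.cong)
  also have "\<dots> \<le> (\<Sum>j<N. (\<mu> j powr (3/4))^2) * (\<Sum>j<N. (\<mu> j powr (1/4))^2)" by (rule cs_sq)
  also have "(\<Sum>j<N. (\<mu> j powr (3/4))^2) = S3" unfolding S3_def pw2 ..
  also have "(\<Sum>j<N. (\<mu> j powr (1/4))^2) = (\<Sum>j<N. sqrt (\<mu> j))" by (rule sum.cong, auto simp: pw3)
  also have "S3 * (\<Sum>j<N. sqrt (\<mu> j)) \<le> S3 * C" by (rule mult_left_mono[OF TN S3nn])
  finally show ?thesis unfolding tp3 .
qed

definition lists_in :: "nat \<Rightarrow> (nat \<Rightarrow> 'a set) \<Rightarrow> 'a list set" where
  "lists_in n A = {xs. length xs = n \<and> (\<forall>k<n. xs ! k \<in> A k)}"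

lemma lists_in_0: "lists_in 0 A = {[]}"
  unfolding lists_in_def by auto

lemma lists_in_Suc: "lists_in (Suc n) A = (\<lambda>(xs, a). xs @ [a]) ` (lists_in n A \<times> A n)"
proof
  show "lists_in (Suc n) A \<subseteq> (\<lambda>(xs, a). xs @ [a]) ` (lists_in n A \<times> A n)"
  proof
    fix xs assume xs: "xs \<in> lists_in (Suc n) A"
    hence len: "length xs = Suc n" and mem: "\<forall>k<Suc n. xs ! k \<in> A k" unfolding lists_in_def by auto
    hence ne: "xs \<noteq> []" by auto
    have eq: "xs = butlast xs @ [last xs]" using ne by simp
    have "butlast xs \<in> lists_in n A"
      unfolding lists_in_def using len mem by (auto simp: nth_butlast)
    moreover have "last xs \<in> A n" using mem len ne by (simp add: last_conv_nth)
    ultimately show "xs \<in> (\<lambda>(xs, a). xs @ [a]) ` (lists_in n A \<times> A n)"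
      using eq by (auto intro!: image_eqI[of _ _ "(butlast xs, last xs)"])
  qed
next
  show "(\<lambda>(xs, a). xs @ [a]) ` (lists_in n A \<times> A n) \<subseteq> lists_in (Suc n) A"
    unfolding lists_in_def by (auto simp: nth_append less_Suc_eq)
qed

lemma finite_lists_in: assumes "\<forall>k<n. finite (A k)" shows "finite (lists_in n A)"
  using assms
proof (induction n)
  case 0 thus ?case by (simp add: lists_in_0)
next
  case (Suc n) thus ?case unfolding lists_in_Suc by auto
qed

lemma sum_prod_lists:
  assumes "\<forall>k<n. finite (A k)"
  shows "(\<Sum>xs\<in>lists_in n A. \<Prod>k<n. f k (xs ! k)) = (\<Prod>k<n. \<Sum>a\<in>A k. (f k a :: 'b :: comm_semiring_1))"
  using assms
proof (induction n)
  case 0 thus ?case by (simp add: lists_in_0)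
next
  case (Suc n)
  have inj: "inj_on (\<lambda>(xs, a). xs @ [a]) (lists_in n A \<times> A n)"
    by (rule inj_onI, auto)
  have "(\<Sum>xs\<in>lists_in (Suc n) A. \<Prod>k<Suc n. f k (xs ! k))
      = (\<Sum>z\<in>lists_in n A \<times> A n. \<Prod>k<Suc n. f k ((fst z @ [snd z]) ! k))"
    unfolding lists_in_Suc by (subst sum.reindex[OF inj], auto simp: case_prod_beta)
  also have "\<dots> = (\<Sum>z\<in>lists_in n A \<times> A n. (\<Prod>k<n. f k (fst z ! k)) * f n (snd z))"
  proof (rule sum.cong[OF refl])
    fix z assume z: "z \<in> lists_in n A \<times> A n"
    hence len: "length (fst z) = n" unfolding lists_in_def by auto
    have "(\<Prod>k<n. f k ((fst z @ [snd z]) ! k)) = (\<Prod>k<n. f k (fst z ! k))"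
      by (rule prod.cong, auto simp: nth_append len)
    thus "(\<Prod>k<Suc n. f k ((fst z @ [snd z]) ! k)) = (\<Prod>k<n. f k (fst z ! k)) * f n (snd z)"
      using len by (simp add: nth_append)
  qed
  also have "\<dots> = (\<Sum>xs\<in>lists_in n A. \<Sum>a\<in>A n. (\<Prod>k<n. f k (xs ! k)) * f n a)"
    by (subst sum.cartesian_product) (simp add: case_prod_beta)
  also have "\<dots> = (\<Sum>xs\<in>lists_in n A. \<Prod>k<n. f k (xs ! k)) * (\<Sum>a\<in>A n. f n a)"
    by (rule sum_product[symmetric])
  also have "\<dots> = (\<Prod>k<Suc n. \<Sum>a\<in>A k. f k a)" using Suc by simp
  finally show ?case .
qed

lemma double_sum_prod:
  assumes "\<forall>k<n. finite (A k)"
  shows "(\<Sum>x\<in>lists_in n A. \<Sum>y\<in>lists_in n A. \<Prod>k<n. h k (x ! k) (y ! k))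
       = (\<Prod>k<n. \<Sum>a\<in>A k. \<Sum>b\<in>A k. (h k a b :: 'b :: comm_semiring_1))"
proof -
  have "(\<Sum>x\<in>lists_in n A. \<Sum>y\<in>lists_in n A. \<Prod>k<n. h k (x ! k) (y ! k))
      = (\<Sum>x\<in>lists_in n A. \<Prod>k<n. \<Sum>b\<in>A k. h k (x ! k) b)"
    by (rule sum.cong[OF refl], rule sum_prod_lists[OF assms])
  also have "\<dots> = (\<Prod>k<n. \<Sum>a\<in>A k. \<Sum>b\<in>A k. h k a b)"
    by (rule sum_prod_lists[OF assms])
  finally show ?thesis .
qed

lemma basis_idx_lists_in: "basis_idx n d = lists_in n (\<lambda>k. {..<d k})"
  unfolding basis_idx_def lists_in_def by auto

definition trr :: "nat \<Rightarrow> (nat \<Rightarrow> nat \<Rightarrow> complex) \<Rightarrow> (nat \<Rightarrow> nat \<Rightarrow> complex) \<Rightarrow> complex" where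
  "trr D s g = (\<Sum>a<D. \<Sum>b<D. s a b * g b a)"

lemma corr_trace_sep:
  assumes rho: "\<forall>x\<in>basis_idx n d. \<forall>y\<in>basis_idx n d.
            \<rho> x y = (\<Sum>i<m. complex_of_real (p i) * (\<Prod>k<n. \<sigma> i k (x ! k) (y ! k)))"
  shows "corr_trace n d L \<rho> \<alpha> = (\<Sum>i<m. complex_of_real (p i) * (\<Prod>k<n. trr (d k) (\<sigma> i k) (gen_ext L (d k) (\<alpha> ! k))))"
proof -
  define g where "g = (\<lambda>k. gen_ext L (d k) (\<alpha> ! k))"
  define B where "B = basis_idx n d"
  have fin: "\<forall>k<n. finite {..<d k}" by auto
  have "corr_trace n d L \<rho> \<alpha> = (\<Sum>x\<in>B. \<Sum>y\<in>B. \<rho> x y * (\<Prod>k<n. g k (y ! k) (x ! k)))"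
    unfolding corr_trace_def B_def g_def by simp
  also have "\<dots> = (\<Sum>x\<in>B. \<Sum>y\<in>B. \<Sum>i<m. complex_of_real (p i) * (\<Prod>k<n. \<sigma> i k (x ! k) (y ! k) * g k (y ! k) (x ! k)))"
  proof (rule sum.cong[OF refl], rule sum.cong[OF refl])
    fix x y assume "x \<in> B" "y \<in> B"
    hence "\<rho> x y = (\<Sum>i<m. complex_of_real (p i) * (\<Prod>k<n. \<sigma> i k (x ! k) (y ! k)))" using rho unfolding B_def by auto
    thus "\<rho> x y * (\<Prod>k<n. g k (y ! k) (x ! k)) = (\<Sum>i<m. complex_of_real (p i) * (\<Prod>k<n. \<sigma> i k (x ! k) (y ! k) * g k (y ! k) (x ! k)))"
      by (simp add: sum_distrib_right prod.distrib mult.assoc)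
  qed
  also have "\<dots> = (\<Sum>x\<in>B. \<Sum>i<m. \<Sum>y\<in>B. complex_of_real (p i) * (\<Prod>k<n. \<sigma> i k (x ! k) (y ! k) * g k (y ! k) (x ! k)))"
    by (rule sum.cong[OF refl], rule sum.swap)
  also have "\<dots> = (\<Sum>i<m. \<Sum>x\<in>B. \<Sum>y\<in>B. complex_of_real (p i) * (\<Prod>k<n. \<sigma> i k (x ! k) (y ! k) * g k (y ! k) (x ! k)))"
    by (rule sum.swap)
  also have "\<dots> = (\<Sum>i<m. complex_of_real (p i) * (\<Prod>k<n. trr (d k) (\<sigma> i k) (g k)))"
  proof (rule sum.cong[OF refl])
    fix i
    have "(\<Sum>x\<in>B. \<Sum>y\<in>B. \<Prod>k<n. \<sigma> i k (x ! k) (y ! k) * g k (y ! k) (x ! k)) = (\<Prod>k<n. trr (d k) (\<sigma> i k) (g k))"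
      unfolding B_def basis_idx_lists_in trr_def by (rule double_sum_prod[OF fin])
    thus "(\<Sum>x\<in>B. \<Sum>y\<in>B. complex_of_real (p i) * (\<Prod>k<n. \<sigma> i k (x ! k) (y ! k) * g k (y ! k) (x ! k)))
        = complex_of_real (p i) * (\<Prod>k<n. trr (d k) (\<sigma> i k) (g k))"
      by (simp only: sum_distrib_left[symmetric])
  qed
  finally show ?thesis unfolding g_def .
qed

lemma trr_real:
  assumes hs: "hermitian_op D s" and hg: "hermitian_op D g"
  shows "trr D s g = complex_of_real (Re (trr D s g))"
proof -
  have "cnj (trr D s g) = (\<Sum>a<D. \<Sum>b<D. s b a * g a b)"
    unfolding trr_def cnj_sum
  proof (rule sum.cong[OF refl], rule sum.cong[OF refl])
    fix a b assume "a \<in> {..<D}" "b \<in> {..<D}"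
    hence ab: "a < D" "b < D" by auto
    have "s b a = cnj (s a b)" using hs ab unfolding hermitian_op_def by blast
    moreover have "g a b = cnj (g b a)" using hg ab unfolding hermitian_op_def by blast
    ultimately show "cnj (s a b * g b a) = s b a * g a b" by simp
  qed
  also have "\<dots> = trr D s g" unfolding trr_def
    by (subst sum.swap, rule sum.cong[OF refl], rule sum.cong[OF refl], simp add: mult.commute)
  finally have "cnj (trr D s g) = trr D s g" .
  hence "Im (trr D s g) = 0" by (metis cnj.simps(2) complex.sel(2) neg_equal_zero)
  thus ?thesis by (simp add: complex_eq_iff)
qed

lemma gen_ext_herm:
  assumes su: "su_generators d (L d)" and a: "a < d^2"
  shows "hermitian_op d (gen_ext L d a)"
proof (cases "a = 0")
  case True thus ?thesis unfolding gen_ext_def hermitian_op_def by auto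
next
  case False
  hence "a \<in> {1..<d^2}" using a by auto
  thus ?thesis using su False unfolding su_generators_def gen_ext_def by auto
qed

lemma trr_id: "op_trace D s = 1 \<Longrightarrow> trr D s (gen_ext L D 0) = 1"
proof -
  assume tr: "op_trace D s = 1"
  have "trr D s (gen_ext L D 0) = (\<Sum>a<D. \<Sum>b<D. if b = a then s a a else 0)"
    unfolding trr_def gen_ext_def by (rule sum.cong[OF refl], rule sum.cong[OF refl], auto)
  also have "\<dots> = (\<Sum>a<D. s a a)" by (subst sum.delta) auto
  also have "\<dots> = 1" using tr unfolding op_trace_def .
  finally show ?thesis .
qed

lemma sum_two_points:
  fixes x y D :: nat
  assumes "x < D" "y < D" "x \<noteq> y"
  shows "(\<Sum>i<D. (if i = x then F else if i = y then G else 0)) = F + (G :: complex)"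
proof -
  have "(\<Sum>i<D. (if i = x then F else if i = y then G else 0)) = (\<Sum>i<D. (if i = x then F else 0) + (if i = y then G else 0))"
    by (rule sum.cong, insert assms, auto)
  also have "\<dots> = (\<Sum>i<D. (if i = x then F else 0)) + (\<Sum>i<D. (if i = y then G else 0))" by (rule sum.distrib)
  also have "(\<Sum>i<D. (if i = x then F else 0)) = F" by (subst sum.delta) (use assms in auto)
  also have "(\<Sum>i<D. (if i = y then G else 0)) = G" by (subst sum.delta) (use assms in auto)
  finally show ?thesis .
qed

lemma density_diag:
  assumes dens: "density_op D s" and x: "x < D"
  shows "s x x = complex_of_real (Re (s x x))" "Re (s x x) \<ge> 0"
proof -
  have herm: "hermitian_op D s" using dens unfolding density_op_def by auto
  have "s x x = cnj (s x x)" using herm x unfolding hermitian_op_def by blast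
  hence "Im (s x x) = 0" by (metis cnj.simps(2) complex.sel(2) neg_equal_zero)
  thus "s x x = complex_of_real (Re (s x x))" by (simp add: complex_eq_iff)
  define v where "v = (\<lambda>i. if i = x then (1::complex) else 0)"
  have q: "(\<Sum>i<D. \<Sum>j<D. cnj (v i) * s i j * v j) = s x x"
  proof -
    have "(\<Sum>i<D. \<Sum>j<D. cnj (v i) * s i j * v j) = (\<Sum>i<D. if i = x then s x x else 0)"
    proof (rule sum.cong[OF refl])
      fix i assume "i \<in> {..<D}"
      have "(\<Sum>j<D. cnj (v i) * s i j * v j) = (\<Sum>j<D. if j = x then cnj (v i) * s i x else 0)"
        by (rule sum.cong, auto simp: v_def)
      also have "\<dots> = cnj (v i) * s i x" using x by (subst sum.delta) auto
      finally show "(\<Sum>j<D. cnj (v i) * s i j * v j) = (if i = x then s x x else 0)" by (simp add: v_def)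
    qed
    also have "\<dots> = s x x" using x by (subst sum.delta) auto
    finally show ?thesis .
  qed
  from dens have "Re (\<Sum>i<D. \<Sum>j<D. cnj (v i) * s i j * v j) \<ge> 0"
    unfolding density_op_def Let_def by blast
  thus "Re (s x x) \<ge> 0" unfolding q .
qed

lemma density_quad2:
  assumes dens: "density_op D s" and xy: "x < D" "y < D" "x \<noteq> y"
  shows "Re (cnj a * s x x * a + cnj a * s x y * b + cnj b * s y x * a + cnj b * s y y * b) \<ge> 0"
proof -
  define v where "v = (\<lambda>i. if i = x then a else if i = y then b else 0)"
  have inner: "(\<Sum>j<D. cnj (v i) * s i j * v j) = cnj (v i) * s i x * a + cnj (v i) * s i y * b" for i
  proof -
    have "(\<Sum>j<D. cnj (v i) * s i j * v j) = (\<Sum>j<D. (if j = x then cnj (v i) * s i x * a else if j = y then cnj (v i) * s i y * b else 0))"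
      by (rule sum.cong, auto simp: v_def)
    also have "\<dots> = cnj (v i) * s i x * a + cnj (v i) * s i y * b" by (rule sum_two_points[OF xy])
    finally show ?thesis .
  qed
  have "(\<Sum>i<D. \<Sum>j<D. cnj (v i) * s i j * v j) = (\<Sum>i<D. (if i = x then cnj a * s x x * a + cnj a * s x y * b else if i = y then cnj b * s y x * a + cnj b * s y y * b else 0))"
    unfolding inner by (rule sum.cong, auto simp: v_def)
  also have "\<dots> = cnj a * s x x * a + cnj a * s x y * b + (cnj b * s y x * a + cnj b * s y y * b)"
    by (rule sum_two_points[OF xy])
  finally have q: "(\<Sum>i<D. \<Sum>j<D. cnj (v i) * s i j * v j) = cnj a * s x x * a + cnj a * s x y * b + cnj b * s y x * a + cnj b * s y y * b"
    by (simp add: add.assoc)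
  from dens have "Re (\<Sum>i<D. \<Sum>j<D. cnj (v i) * s i j * v j) \<ge> 0"
    unfolding density_op_def Let_def by blast
  thus ?thesis unfolding q .
qed

lemma density_offdiag:
  assumes dens: "density_op D s" and xy: "x < D" "y < D"
  shows "(cmod (s x y))^2 \<le> Re (s x x) * Re (s y y)"
proof (cases "x = y")
  case True
  have "s x x = complex_of_real (Re (s x x))" "Re (s x x) \<ge> 0" using density_diag[OF dens xy(1)] by auto
  thus ?thesis using True by (metis norm_of_real power2_abs power2_eq_square order_refl)
next
  case False
  have herm: "hermitian_op D s" using dens unfolding density_op_def by auto
  define z where "z = s x y"
  define c where "c = (cmod z)^2"
  define sx where "sx = Re (s x x)"
  define sy where "sy = Re (s y y)"
  have sxx: "s x x = complex_of_real sx" and sx0: "sx \<ge> 0" using density_diag[OF dens xy(1)] unfolding sx_def by auto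
  have syy: "s y y = complex_of_real sy" and sy0: "sy \<ge> 0" using density_diag[OF dens xy(2)] unfolding sy_def by auto
  have syx: "s y x = cnj z" using herm xy unfolding hermitian_op_def z_def by blast
  have zz: "z * cnj z = complex_of_real c" unfolding c_def by (metis complex_norm_square of_real_power)
  have c0: "c \<ge> 0" unfolding c_def by simp
  have quad: "t * t * sx - 2 * t * c + sy * c \<ge> 0" for t :: real
  proof -
    have "Re (cnj (complex_of_real t) * s x x * complex_of_real t + cnj (complex_of_real t) * s x y * (- cnj z)
        + cnj (- cnj z) * s y x * complex_of_real t + cnj (- cnj z) * s y y * (- cnj z)) \<ge> 0"
      by (rule density_quad2[OF dens xy False])
    also have "cnj (complex_of_real t) * s x x * complex_of_real t + cnj (complex_of_real t) * s x y * (- cnj z)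
        + cnj (- cnj z) * s y x * complex_of_real t + cnj (- cnj z) * s y y * (- cnj z)
        = complex_of_real (t * t * sx) - complex_of_real t * (z * cnj z) - complex_of_real t * (z * cnj z) + complex_of_real sy * (z * cnj z)"
      unfolding sxx syy syx z_def[symmetric] by (simp add: algebra_simps)
    also have "\<dots> = complex_of_real (t * t * sx - 2 * t * c + sy * c)" unfolding zz by simp
    finally show ?thesis by simp
  qed
  show ?thesis
  proof (cases "c = 0")
    case True thus ?thesis using sx0 sy0 unfolding c_def z_def sx_def sy_def by simp
  next
    case cne: False
    hence cpos: "c > 0" using c0 by simp
    show ?thesis
    proof (cases "sx = 0")
      case True
      have "0 \<le> ((sy * c + 1) / (2 * c)) * ((sy * c + 1) / (2 * c)) * sx - 2 * ((sy * c + 1) / (2 * c)) * c + sy * c"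
        by (rule quad)
      also have "\<dots> = -1" using True cpos by (simp add: field_simps)
      finally show ?thesis by simp
    next
      case False
      hence sxp: "sx > 0" using sx0 by simp
      have "0 \<le> (c / sx) * (c / sx) * sx - 2 * (c / sx) * c + sy * c" by (rule quad)
      also have "\<dots> = c * (sy - c / sx)" using sxp by (simp add: field_simps power2_eq_square)
      finally have "c / sx \<le> sy" using cpos by (simp add: zero_le_mult_iff)
      hence "c \<le> sx * sy" using sxp by (simp add: divide_le_eq mult.commute)
      thus ?thesis unfolding c_def z_def sx_def sy_def .
    qed
  qed
qed

lemma purity:
  assumes dens: "density_op D s"
  shows "(\<Sum>x<D. \<Sum>y<D. (cmod (s x y))^2) \<le> 1"
proof -
  have "(\<Sum>x<D. \<Sum>y<D. (cmod (s x y))^2) \<le> (\<Sum>x<D. \<Sum>y<D. Re (s x x) * Re (s y y))"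
    by (rule sum_mono, rule sum_mono, rule density_offdiag[OF dens], auto)
  also have "\<dots> = (\<Sum>x<D. Re (s x x)) * (\<Sum>y<D. Re (s y y))" by (rule sum_product[symmetric])
  also have "(\<Sum>x<D. Re (s x x)) = 1"
    using dens unfolding density_op_def op_trace_def by (simp add: Re_sum[symmetric])
  finally show ?thesis by simp
qed

lemma ipv_pairs: "ipv ({..<D} \<times> {..<D}) u v = (\<Sum>x<D. \<Sum>y<D. cnj (u (x, y)) * v (x, y))"
  unfolding ipv_def by (rule sum.cartesian_product[symmetric, where g = "\<lambda>x y. cnj (u (x, y)) * v (x, y)", simplified])

lemma local_bound:
  assumes su: "su_generators d (L d)" and dens: "density_op d s" and d1: "d \<ge> 1"
  shows "1 / real d + (\<Sum>a\<in>{1..<d^2}. (cmod (trr d s (L d a)))^2) / 2 \<le> 1"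
proof -
  define I where "I = {..<d} \<times> {..<d}"
  define r2 where "r2 = complex_of_real (1 / sqrt 2)"
  define rd where "rd = complex_of_real (1 / sqrt (real d))"
  define F where "F = (\<lambda>a (x, y). if a = 0 then (if x = y then rd else 0) else L d a x y * r2)"
  define f where "f = (\<lambda>(x, y). s x y)"
  have herm: "\<And>a x y. a \<in> {1..<d^2} \<Longrightarrow> x < d \<Longrightarrow> y < d \<Longrightarrow> cnj (L d a x y) = L d a y x"
  proof -
    fix a x y assume "a \<in> {1..<d^2}" "x < d" "y < d"
    hence "L d a y x = cnj (L d a x y)" using su unfolding su_generators_def hermitian_op_def by blast
    thus "cnj (L d a x y) = L d a y x" by simp
  qed
  have tr0: "\<And>a. a \<in> {1..<d^2} \<Longrightarrow> (\<Sum>x<d. L d a x x) = 0"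
    using su unfolding su_generators_def op_trace_def by blast
  have orth: "\<And>a b. a \<in> {1..<d^2} \<Longrightarrow> b \<in> {1..<d^2} \<Longrightarrow> (\<Sum>i<d. \<Sum>l<d. L d a i l * L d b l i) = (if a = b then 2 else 0)"
    using su unfolding su_generators_def op_trace_def op_mult_def by blast
  have r2r2: "cnj r2 * r2 = 1 / 2" unfolding r2_def
    by (simp flip: of_real_mult)
  have rdrd: "cnj rd * rd = 1 / of_nat d" unfolding rd_def
    by (simp flip: of_real_mult)
  have pos: "\<And>a. a \<in> {0..<d^2} \<Longrightarrow> a \<noteq> 0 \<Longrightarrow> a \<in> {1..<d^2}" by auto
  have on01: "ipv I (F 0) (F b) = 0" if b: "b \<in> {1..<d^2}" for b
  proof -
    have "ipv I (F 0) (F b) = (\<Sum>x<d. \<Sum>y<d. if y = x then cnj rd * (L d b x x * r2) else 0)"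
      unfolding I_def ipv_pairs F_def using b by (intro sum.cong refl) auto
    also have "\<dots> = (\<Sum>x<d. cnj rd * (L d b x x * r2))" by (rule sum.cong[OF refl], subst sum.delta, auto)
    also have "\<dots> = cnj rd * r2 * (\<Sum>x<d. L d b x x)" by (simp add: sum_distrib_left algebra_simps)
    also have "\<dots> = 0" using tr0[OF b] by simp
    finally show ?thesis .
  qed
  have on: "\<forall>a\<in>{0..<d^2}. \<forall>b\<in>{0..<d^2}. ipv I (F a) (F b) = (if a = b then 1 else 0)"
  proof (intro ballI)
    fix a b assume a: "a \<in> {0..<d^2}" and b: "b \<in> {0..<d^2}"
    show "ipv I (F a) (F b) = (if a = b then 1 else 0)"
    proof (cases "a = 0")
      case a0: True
      show ?thesis
      proof (cases "b = 0")
        case True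
        have "ipv I (F a) (F b) = (\<Sum>x<d. \<Sum>y<d. if y = x then cnj rd * rd else 0)"
          unfolding I_def ipv_pairs F_def using a0 True by (intro sum.cong refl) auto
        also have "\<dots> = (\<Sum>x<d. cnj rd * rd)" by (rule sum.cong[OF refl], subst sum.delta, auto)
        also have "\<dots> = 1" unfolding rdrd using d1 by simp
        finally show ?thesis using a0 True by simp
      next
        case False
        thus ?thesis using on01[OF pos[OF b False]] a0 by simp
      qed
    next
      case an0: False
      have a1: "a \<in> {1..<d^2}" using pos[OF a an0] .
      show ?thesis
      proof (cases "b = 0")
        case True
        have "ipv I (F a) (F b) = cnj (ipv I (F b) (F a))" by (rule ipv_cnj)
        also have "\<dots> = 0" using on01[OF a1] True by simp
        finally show ?thesis using an0 True by simp
      next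
        case bn0: False
        have b1: "b \<in> {1..<d^2}" using pos[OF b bn0] .
        have "ipv I (F a) (F b) = (\<Sum>x<d. \<Sum>y<d. cnj r2 * r2 * (L d a y x * L d b x y))"
          unfolding I_def ipv_pairs F_def using an0 bn0
        proof (intro sum.cong refl)
          fix x y assume "x \<in> {..<d}" "y \<in> {..<d}"
          thus "cnj (case (x, y) of (x, y) \<Rightarrow> if a = 0 then if x = y then rd else 0 else L d a x y * r2) *
             (case (x, y) of (x, y) \<Rightarrow> if b = 0 then if x = y then rd else 0 else L d b x y * r2) =
             cnj r2 * r2 * (L d a y x * L d b x y)"
            using herm[OF a1, of x y] an0 bn0 by simp
        qed
        also have "\<dots> = cnj r2 * r2 * (\<Sum>x<d. \<Sum>y<d. L d a y x * L d b x y)" by (simp add: sum_distrib_left)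
        also have "(\<Sum>x<d. \<Sum>y<d. L d a y x * L d b x y) = (\<Sum>y<d. \<Sum>x<d. L d a y x * L d b x y)"
          by (rule sum.swap)
        also have "\<dots> = (if a = b then 2 else 0)" by (rule orth[OF a1 b1])
        also have "cnj r2 * r2 * (if a = b then 2 else 0) = (if a = b then 1 else 0)"
          unfolding r2r2 by simp
        finally show ?thesis .
      qed
    qed
  qed
  have c0: "ipv I (F 0) f = rd"
  proof -
    have "ipv I (F 0) f = (\<Sum>x<d. \<Sum>y<d. if y = x then cnj rd * s x x else 0)"
      unfolding I_def ipv_pairs F_def f_def by (intro sum.cong refl) auto
    also have "\<dots> = (\<Sum>x<d. cnj rd * s x x)" by (rule sum.cong[OF refl], subst sum.delta, auto)
    also have "\<dots> = cnj rd * op_trace d s" unfolding op_trace_def by (simp add: sum_distrib_left)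
    also have "\<dots> = rd" using dens unfolding density_op_def rd_def by simp
    finally show ?thesis .
  qed
  have ca: "ipv I (F a) f = r2 * trr d s (L d a)" if a1: "a \<in> {1..<d^2}" for a
  proof -
    have an0: "a \<noteq> 0" using a1 by auto
    have "ipv I (F a) f = (\<Sum>x<d. \<Sum>y<d. r2 * (s x y * L d a y x))"
      unfolding I_def ipv_pairs F_def f_def
    proof (intro sum.cong refl)
      fix x y assume "x \<in> {..<d}" "y \<in> {..<d}"
      thus "cnj (case (x, y) of (x, y) \<Rightarrow> if a = 0 then if x = y then rd else 0 else L d a x y * r2) *
           (case (x, y) of (x, y) \<Rightarrow> s x y) = r2 * (s x y * L d a y x)"
        using herm[OF a1, of x y] an0 by (simp add: r2_def)
    qed
    also have "\<dots> = r2 * trr d s (L d a)" unfolding trr_def by (simp add: sum_distrib_left)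
    finally show ?thesis .
  qed
  have "(\<Sum>a\<in>{0..<d^2}. (cmod (ipv I (F a) f))^2) \<le> Re (ipv I f f)"
    by (rule bessel[OF _ on], simp)
  also have "Re (ipv I f f) = (\<Sum>x<d. \<Sum>y<d. (cmod (s x y))^2)"
    unfolding ipv_self_eq Re_complex_of_real I_def f_def by (simp add: sum.cartesian_product case_prod_beta)
  also have "\<dots> \<le> 1" by (rule purity[OF dens])
  finally have B: "(\<Sum>a\<in>{0..<d^2}. (cmod (ipv I (F a) f))^2) \<le> 1" .
  have "(\<Sum>a\<in>{0..<d^2}. (cmod (ipv I (F a) f))^2) = (cmod (ipv I (F 0) f))^2 + (\<Sum>a\<in>{Suc 0..<d^2}. (cmod (ipv I (F a) f))^2)"
    by (rule sum.atLeast_Suc_lessThan, insert d1, simp)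
  also have "(cmod (ipv I (F 0) f))^2 = 1 / real d" unfolding c0 rd_def norm_of_real power2_abs using d1
    by (simp add: power_divide)
  also have "(\<Sum>a\<in>{Suc 0..<d^2}. (cmod (ipv I (F a) f))^2) = (\<Sum>a\<in>{1..<d^2}. (cmod (trr d s (L d a)))^2 / 2)"
  proof (rule sum.cong, simp)
    fix a assume "a \<in> {1..<d^2}"
    hence "ipv I (F a) f = r2 * trr d s (L d a)" by (rule ca)
    hence "cmod (ipv I (F a) f) = cmod r2 * cmod (trr d s (L d a))" by (simp only: norm_mult)
    moreover have "cmod r2 = 1 / sqrt 2" unfolding r2_def norm_of_real by simp
    ultimately have "cmod (ipv I (F a) f) = (1 / sqrt 2) * cmod (trr d s (L d a))" by simp
    hence "(cmod (ipv I (F a) f))^2 = (1 / sqrt 2)^2 * (cmod (trr d s (L d a)))^2"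
      by (simp only: power_mult_distrib)
    also have "(1 / sqrt 2)^2 = (1 / 2 :: real)" by (simp add: power_divide)
    finally show "(cmod (ipv I (F a) f))^2 = (cmod (trr d s (L d a)))^2 / 2" by simp
  qed
  also have "\<dots> = (\<Sum>a\<in>{1..<d^2}. (cmod (trr d s (L d a)))^2) / 2" by (simp add: sum_divide_distrib)
  finally show ?thesis using B by simp
qed

lemma moment_max:
  fixes g2 g3 :: "nat \<Rightarrow> real"
  assumes n: "n > 0" and each: "\<forall>k<n. (g2 k)^2 \<le> g3 k * C" and C: "C \<ge> 0"
  shows "(Max (g2 ` {..<n}))^2 \<le> Max (g3 ` {..<n}) * C"
proof -
  have ne: "g2 ` {..<n} \<noteq> {}" "g3 ` {..<n} \<noteq> {}" using n by auto
  obtain k where k: "k < n" "Max (g2 ` {..<n}) = g2 k"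
    using Max_in[OF finite_imageI[OF finite_lessThan] ne(1)] by auto
  have "g3 k \<le> Max (g3 ` {..<n})" using k(1) by (intro Max_ge) auto
  hence "g3 k * C \<le> Max (g3 ` {..<n}) * C" using C by (rule mult_right_mono)
  thus ?thesis using each k by fastforce
qed

lemma sum_shift_lo:
  fixes lo D :: nat
  shows "lo \<le> D \<Longrightarrow> (\<Sum>r<D - lo. g (lo + r)) = (\<Sum>a\<in>{lo..<D}. (g a :: real))"
proof -
  assume "lo \<le> D"
  have im: "{lo..<D} = (\<lambda>r. lo + r) ` {..<D - lo}"
  proof
    show "{lo..<D} \<subseteq> (\<lambda>r. lo + r) ` {..<D - lo}"
    proof
      fix x assume "x \<in> {lo..<D}"
      thus "x \<in> (\<lambda>r. lo + r) ` {..<D - lo}" by (intro image_eqI[of _ _ "x - lo"]) auto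
    qed
  qed auto
  have "(\<Sum>a\<in>{lo..<D}. g a) = (\<Sum>a\<in>(\<lambda>r. lo + r) ` {..<D - lo}. g a)"
    unfolding im ..
  also have "\<dots> = (\<Sum>r<D - lo. g (lo + r))" by (subst sum.reindex, auto)
  finally show ?thesis by simp
qed

lemma tensor_unfold:
  fixes X :: "nat list \<Rightarrow> real" and f :: "nat \<Rightarrow> nat \<Rightarrow> nat \<Rightarrow> real" and c :: "nat \<Rightarrow> real"
  assumes k0: "k0 < n" and lo: "\<forall>j<n. lo \<le> d j ^ 2"
   and Xeq: "\<forall>\<gamma>. length \<gamma> = n \<longrightarrow> (\<forall>j<n. lo \<le> \<gamma> ! j \<and> \<gamma> ! j < d j ^ 2) \<longrightarrow> X \<gamma> = (\<Sum>i<m. p i * (\<Prod>k<n. f i k (\<gamma> ! k)))"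
   and p0: "\<forall>i<m. p i \<ge> 0" and p1: "(\<Sum>i<m. p i) = 1"
   and bnd: "\<forall>i<m. \<forall>k<n. (\<Sum>a\<in>{lo..<d k ^ 2}. (f i k a)^2) \<le> (c k)^2" and c0: "\<forall>k<n. c k \<ge> 0"
  shows "(trace_pow_half (unfold_gram n d lo X k0) 2)^2 \<le> trace_pow_half (unfold_gram n d lo X k0) 3 * (\<Prod>k<n. c k)"
proof -
  define N where "N = d k0 ^ 2 - lo"
  define R where "R = {\<gamma>. length \<gamma> = n \<and> \<gamma> ! k0 = 0 \<and> (\<forall>j<n. j \<noteq> k0 \<longrightarrow> lo \<le> \<gamma> ! j \<and> \<gamma> ! j < (d j)^2)}"
  define A where "A = (\<lambda>k. if k = k0 then {0} else {lo..<d k ^ 2})"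
  have RA: "R = lists_in n A" unfolding R_def lists_in_def A_def using k0 by auto
  have finA: "\<forall>k<n. finite (A k)" unfolding A_def by auto
  have finR: "finite R" unfolding RA by (rule finite_lists_in[OF finA])
  define Xm where "Xm = (\<lambda>r \<gamma>. X (\<gamma>[k0 := lo + r]))"
  have G: "unfold_gram n d lo X k0 = mat N N (\<lambda>(r, s). \<Sum>\<gamma>\<in>R. Xm r \<gamma> * Xm s \<gamma>)"
    unfolding unfold_gram_def Let_def N_def R_def Xm_def ..
  define a where "a = (\<lambda>i r. f i k0 (lo + r))"
  define b where "b = (\<lambda>i \<gamma>. \<Prod>k\<in>{..<n} - {k0}. f i k (\<gamma> ! k))"
  have Xeq': "\<forall>r<N. \<forall>\<gamma>\<in>R. Xm r \<gamma> = (\<Sum>i<m. p i * a i r * b i \<gamma>)"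
  proof (intro allI impI ballI)
    fix r \<gamma> assume r: "r < N" and g: "\<gamma> \<in> R"
    define \<gamma>' where "\<gamma>' = \<gamma>[k0 := lo + r]"
    have len: "length \<gamma> = n" using g unfolding R_def by auto
    have len': "length \<gamma>' = n" unfolding \<gamma>'_def using len by simp
    have nth': "\<gamma>' ! k = (if k = k0 then lo + r else \<gamma> ! k)" if "k < n" for k
      unfolding \<gamma>'_def using that len k0 by (simp add: nth_list_update)
    have range: "\<forall>j<n. lo \<le> \<gamma>' ! j \<and> \<gamma>' ! j < d j ^ 2"
      using g r nth' unfolding R_def N_def by auto
    have "Xm r \<gamma> = (\<Sum>i<m. p i * (\<Prod>k<n. f i k (\<gamma>' ! k)))"
      unfolding Xm_def \<gamma>'_def[symmetric] using Xeq len' range by blast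
    also have "\<dots> = (\<Sum>i<m. p i * a i r * b i \<gamma>)"
    proof (rule sum.cong[OF refl])
      fix i
      have "(\<Prod>k<n. f i k (\<gamma>' ! k)) = f i k0 (\<gamma>' ! k0) * (\<Prod>k\<in>{..<n} - {k0}. f i k (\<gamma>' ! k))"
        by (rule prod.remove, auto simp: k0)
      also have "(\<Prod>k\<in>{..<n} - {k0}. f i k (\<gamma>' ! k)) = b i \<gamma>"
        unfolding b_def by (rule prod.cong, auto simp: nth')
      also have "f i k0 (\<gamma>' ! k0) = a i r" unfolding a_def using nth' k0 by simp
      finally show "p i * (\<Prod>k<n. f i k (\<gamma>' ! k)) = p i * a i r * b i \<gamma>" by simp
    qed
    finally show "Xm r \<gamma> = (\<Sum>i<m. p i * a i r * b i \<gamma>)" .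
  qed
  have ab: "\<forall>i<m. sqrt (\<Sum>r<N. (a i r)^2) * sqrt (\<Sum>\<gamma>\<in>R. (b i \<gamma>)^2) \<le> (\<Prod>k<n. c k)"
  proof (intro allI impI)
    fix i assume i: "i < m"
    have "(\<Sum>r<N. (a i r)^2) = (\<Sum>x\<in>{lo..<d k0 ^ 2}. (f i k0 x)^2)"
      unfolding a_def N_def by (rule sum_shift_lo[of lo "d k0 ^ 2" "\<lambda>x. (f i k0 x)^2"], insert lo k0, auto)
    also have "\<dots> \<le> (c k0)^2" using bnd i k0 by auto
    finally have sa: "sqrt (\<Sum>r<N. (a i r)^2) \<le> c k0" using c0 k0 real_sqrt_le_mono by fastforce
    define h where "h = (\<lambda>k x. if k = k0 then 1 else (f i k x)^2)"
    have "(\<Sum>\<gamma>\<in>R. (b i \<gamma>)^2) = (\<Sum>\<gamma>\<in>lists_in n A. \<Prod>k<n. h k (\<gamma> ! k))"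
      unfolding RA
    proof (rule sum.cong[OF refl])
      fix \<gamma>
      have "(\<Prod>k<n. h k (\<gamma> ! k)) = h k0 (\<gamma> ! k0) * (\<Prod>k\<in>{..<n} - {k0}. h k (\<gamma> ! k))"
        by (rule prod.remove, auto simp: k0)
      also have "h k0 (\<gamma> ! k0) = 1" by (simp add: h_def)
      also have "(\<Prod>k\<in>{..<n} - {k0}. h k (\<gamma> ! k)) = (\<Prod>k\<in>{..<n} - {k0}. (f i k (\<gamma> ! k))^2)"
        by (rule prod.cong) (auto simp: h_def)
      also have "\<dots> = (b i \<gamma>)^2" unfolding b_def by (rule prod_power_distrib[symmetric])
      finally show "(b i \<gamma>)^2 = (\<Prod>k<n. h k (\<gamma> ! k))" by simp
    qed
    also have "\<dots> = (\<Prod>k<n. \<Sum>x\<in>A k. h k x)" by (rule sum_prod_lists[OF finA])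
    also have "\<dots> = (\<Sum>x\<in>A k0. h k0 x) * (\<Prod>k\<in>{..<n} - {k0}. \<Sum>x\<in>A k. h k x)"
      by (rule prod.remove, auto simp: k0)
    also have "(\<Sum>x\<in>A k0. h k0 x) = 1" unfolding A_def h_def by simp
    also have "(\<Prod>k\<in>{..<n} - {k0}. \<Sum>x\<in>A k. h k x) = (\<Prod>k\<in>{..<n} - {k0}. \<Sum>x\<in>{lo..<d k ^ 2}. (f i k x)^2)"
      unfolding A_def h_def by (rule prod.cong, auto)
    also have "\<dots> \<le> (\<Prod>k\<in>{..<n} - {k0}. (c k)^2)"
      by (rule prod_mono, insert bnd i, auto intro: sum_nonneg)
    also have "\<dots> = (\<Prod>k\<in>{..<n} - {k0}. c k)^2" by (rule prod_power_distrib[symmetric])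
    finally have "(\<Sum>\<gamma>\<in>R. (b i \<gamma>)^2) \<le> (\<Prod>k\<in>{..<n} - {k0}. c k)^2" by simp
    hence sb: "sqrt (\<Sum>\<gamma>\<in>R. (b i \<gamma>)^2) \<le> (\<Prod>k\<in>{..<n} - {k0}. c k)"
      using c0 by (metis (no_types, lifting) DiffD1 lessThan_iff prod_nonneg real_sqrt_le_mono real_sqrt_abs abs_of_nonneg)
    have "sqrt (\<Sum>r<N. (a i r)^2) * sqrt (\<Sum>\<gamma>\<in>R. (b i \<gamma>)^2) \<le> c k0 * (\<Prod>k\<in>{..<n} - {k0}. c k)"
      by (rule mult_mono[OF sa sb], insert c0 k0, auto intro: sum_nonneg)
    also have "\<dots> = (\<Prod>k<n. c k)" by (rule prod.remove[symmetric], auto simp: k0)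
    finally show "sqrt (\<Sum>r<N. (a i r)^2) * sqrt (\<Sum>\<gamma>\<in>R. (b i \<gamma>)^2) \<le> (\<Prod>k<n. c k)" .
  qed
  show ?thesis unfolding G by (rule matrix_main[OF finR refl Xeq' p0 p1 ab])
qed

lemma sep_real_tensor:
  assumes sep: "fully_separable n d \<rho>" and su: "\<forall>k<n. su_generators (d k) (L (d k))"
  shows "\<exists>(m::nat) (p::nat \<Rightarrow> real) (\<sigma>::nat \<Rightarrow> nat \<Rightarrow> nat \<Rightarrow> nat \<Rightarrow> complex). (\<forall>i<m. p i \<ge> 0) \<and> (\<Sum>i<m. p i) = 1 \<and> (\<forall>i<m. \<forall>k<n. density_op (d k) (\<sigma> i k))
     \<and> (\<forall>\<alpha>. (\<forall>k<n. \<alpha> ! k < d k ^ 2) \<longrightarrow>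
          Re (corr_trace n d L \<rho> \<alpha>) = (\<Sum>i<m. p i * (\<Prod>k<n. Re (trr (d k) (\<sigma> i k) (gen_ext L (d k) (\<alpha> ! k))))))"
proof -
  from sep obtain m :: nat and p :: "nat \<Rightarrow> real" and \<sigma> :: "nat \<Rightarrow> nat \<Rightarrow> nat \<Rightarrow> nat \<Rightarrow> complex" where p0: "\<forall>i<m. p i \<ge> 0" and p1: "(\<Sum>i<m. p i) = 1"
    and dens: "\<forall>i<m. \<forall>k<n. density_op (d k) (\<sigma> i k)"
    and rho: "\<forall>x\<in>basis_idx n d. \<forall>y\<in>basis_idx n d.
            \<rho> x y = (\<Sum>i<m. complex_of_real (p i) * (\<Prod>k<n. \<sigma> i k (x ! k) (y ! k)))"
    unfolding fully_separable_def by blast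
  have "Re (corr_trace n d L \<rho> \<alpha>) = (\<Sum>i<m. p i * (\<Prod>k<n. Re (trr (d k) (\<sigma> i k) (gen_ext L (d k) (\<alpha> ! k)))))"
    if \<alpha>: "\<forall>k<n. \<alpha> ! k < d k ^ 2" for \<alpha>
  proof -
    have "corr_trace n d L \<rho> \<alpha> = (\<Sum>i<m. complex_of_real (p i) * (\<Prod>k<n. trr (d k) (\<sigma> i k) (gen_ext L (d k) (\<alpha> ! k))))"
      by (rule corr_trace_sep[OF rho])
    also have "\<dots> = (\<Sum>i<m. complex_of_real (p i) * (\<Prod>k<n. complex_of_real (Re (trr (d k) (\<sigma> i k) (gen_ext L (d k) (\<alpha> ! k))))))"
    proof (rule sum.cong[OF refl])
      fix i assume i: "i \<in> {..<m}"
      have "(\<Prod>k<n. trr (d k) (\<sigma> i k) (gen_ext L (d k) (\<alpha> ! k))) = (\<Prod>k<n. complex_of_real (Re (trr (d k) (\<sigma> i k) (gen_ext L (d k) (\<alpha> ! k)))))"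
      proof (rule prod.cong[OF refl])
        fix k assume k: "k \<in> {..<n}"
        have hs: "hermitian_op (d k) (\<sigma> i k)" using dens i k unfolding density_op_def by auto
        have hg: "hermitian_op (d k) (gen_ext L (d k) (\<alpha> ! k))" using gen_ext_herm[of "d k" L "\<alpha> ! k"] su \<alpha> k by auto
        show "trr (d k) (\<sigma> i k) (gen_ext L (d k) (\<alpha> ! k)) = complex_of_real (Re (trr (d k) (\<sigma> i k) (gen_ext L (d k) (\<alpha> ! k))))"
          by (rule trr_real[OF hs hg])
      qed
      thus "complex_of_real (p i) * (\<Prod>k<n. trr (d k) (\<sigma> i k) (gen_ext L (d k) (\<alpha> ! k))) =
            complex_of_real (p i) * (\<Prod>k<n. complex_of_real (Re (trr (d k) (\<sigma> i k) (gen_ext L (d k) (\<alpha> ! k)))))" by simp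
    qed
    also have "\<dots> = complex_of_real (\<Sum>i<m. p i * (\<Prod>k<n. Re (trr (d k) (\<sigma> i k) (gen_ext L (d k) (\<alpha> ! k)))))"
      by (simp only: of_real_sum of_real_mult of_real_prod)
    finally have ct: "corr_trace n d L \<rho> \<alpha> = complex_of_real (\<Sum>i<m. p i * (\<Prod>k<n. Re (trr (d k) (\<sigma> i k) (gen_ext L (d k) (\<alpha> ! k)))))" .
    show ?thesis unfolding ct Re_complex_of_real ..
  qed
  thus ?thesis using p0 p1 dens by blast
qed

lemma re_sq_le: "(Re z)^2 \<le> (cmod z)^2"
  using abs_Re_le_cmod[of z] by (metis abs_ge_zero power2_abs power_mono)

theorem theorem3:
  fixes n :: nat and d :: "nat \<Rightarrow> nat"
    and L :: "nat \<Rightarrow> nat \<Rightarrow> nat \<Rightarrow> nat \<Rightarrow> complex"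
    and \<rho> :: "nat list \<Rightarrow> nat list \<Rightarrow> complex"
  assumes "n \<ge> 2"
    and "\<forall>k<n. d k \<ge> 2"
    and "\<forall>k<n. su_generators (d k) (L (d k))"
    and "fully_separable n d \<rho>"
  shows "(tensor_moment n d 1 (corr_tensor n d L \<rho>) 2)^2
           \<le> tensor_moment n d 1 (corr_tensor n d L \<rho>) 3
              * (\<Prod>k<n. sqrt ((real (d k) - 1) / (2 * real (d k))))
       \<and> (tensor_moment n d 0 (can_corr_tensor n d L \<rho>) 2)^2
           \<le> tensor_moment n d 0 (can_corr_tensor n d L \<rho>) 3
              * (\<Prod>k<n. sqrt ((real (d k)^2 - real (d k) + 2) / (2 * real (d k)^2)))"
proof -
  note n2 = assms(1) and d2 = assms(2) and su = assms(3)
  from sep_real_tensor[OF assms(4) su] obtain m :: nat and p :: "nat \<Rightarrow> real" and \<sigma> :: "nat \<Rightarrow> nat \<Rightarrow> nat \<Rightarrow> nat \<Rightarrow> complex" where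
    p0: "\<forall>i<m. p i \<ge> 0" and p1: "(\<Sum>i<m. p i) = 1" and dens: "\<forall>i<m. \<forall>k<n. density_op (d k) (\<sigma> i k)"
    and ReT: "\<forall>\<alpha>. (\<forall>k<n. \<alpha> ! k < d k ^ 2) \<longrightarrow>
          Re (corr_trace n d L \<rho> \<alpha>) = (\<Sum>i<m. p i * (\<Prod>k<n. Re (trr (d k) (\<sigma> i k) (gen_ext L (d k) (\<alpha> ! k)))))"
    by blast
  define t where "t = (\<lambda>i k a. Re (trr (d k) (\<sigma> i k) (gen_ext L (d k) a)))"
  have npos: "n > 0" using n2 by simp
  have dpos: "\<And>k. k < n \<Longrightarrow> real (d k) > 0" using d2 by (metis of_nat_0_less_iff less_le_trans zero_less_numeral)
  have LB: "(\<Sum>a\<in>{1..<d k ^ 2}. (t i k a)^2) \<le> 2 * (1 - 1 / real (d k))" if i: "i < m" and k: "k < n" for i k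
  proof -
    have "1 / real (d k) + (\<Sum>a\<in>{1..<d k^2}. (cmod (trr (d k) (\<sigma> i k) (L (d k) a)))^2) / 2 \<le> 1"
      by (rule local_bound, insert su dens d2 i k, auto)
    hence "(\<Sum>a\<in>{1..<d k^2}. (cmod (trr (d k) (\<sigma> i k) (L (d k) a)))^2) \<le> 2 * (1 - 1 / real (d k))" by simp
    moreover have "(\<Sum>a\<in>{1..<d k ^ 2}. (t i k a)^2) \<le> (\<Sum>a\<in>{1..<d k^2}. (cmod (trr (d k) (\<sigma> i k) (L (d k) a)))^2)"
      by (rule sum_mono, auto simp: t_def gen_ext_def re_sq_le)
    ultimately show ?thesis by linarith
  qed
  have t0: "t i k 0 = 1" if i: "i < m" and k: "k < n" for i k
    unfolding t_def using trr_id[of "d k" "\<sigma> i k" L] dens i k unfolding density_op_def by auto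
  define c1 where "c1 = (\<lambda>k. sqrt ((real (d k) - 1) / (2 * real (d k))))"
  have part1: "(tensor_moment n d 1 (corr_tensor n d L \<rho>) 2)^2
           \<le> tensor_moment n d 1 (corr_tensor n d L \<rho>) 3 * (\<Prod>k<n. c1 k)"
  proof -
    have c10: "\<forall>k<n. c1 k \<ge> 0"
    proof (intro allI impI)
      fix k assume k: "k < n"
      have "real (d k) \<ge> 2" using d2 k by simp
      thus "c1 k \<ge> 0" unfolding c1_def by simp
    qed
    have each: "(trace_pow_half (unfold_gram n d 1 (corr_tensor n d L \<rho>) k0) 2)^2
          \<le> trace_pow_half (unfold_gram n d 1 (corr_tensor n d L \<rho>) k0) 3 * (\<Prod>k<n. c1 k)" if k0: "k0 < n" for k0
    proof (rule tensor_unfold[OF k0, where f = "\<lambda>i k a. t i k a / 2" and m = m and p = p])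
      show "\<forall>j<n. 1 \<le> d j ^ 2" using d2 by (auto simp: Suc_le_eq)
      show "\<forall>\<gamma>. length \<gamma> = n \<longrightarrow> (\<forall>j<n. 1 \<le> \<gamma> ! j \<and> \<gamma> ! j < d j ^ 2) \<longrightarrow>
          corr_tensor n d L \<rho> \<gamma> = (\<Sum>i<m. p i * (\<Prod>k<n. t i k (\<gamma> ! k) / 2))"
      proof (intro allI impI)
        fix \<gamma> :: "nat list" assume "length \<gamma> = n" and rng: "\<forall>j<n. 1 \<le> \<gamma> ! j \<and> \<gamma> ! j < d j ^ 2"
        have "corr_tensor n d L \<rho> \<gamma> = (\<Sum>i<m. p i * (\<Prod>k<n. t i k (\<gamma> ! k))) / 2 ^ n"
          unfolding corr_tensor_def t_def using ReT rng by auto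
        also have "\<dots> = (\<Sum>i<m. p i * (\<Prod>k<n. t i k (\<gamma> ! k) / 2))"
          by (simp add: sum_divide_distrib prod_dividef)
        finally show "corr_tensor n d L \<rho> \<gamma> = (\<Sum>i<m. p i * (\<Prod>k<n. t i k (\<gamma> ! k) / 2))" .
      qed
      show "\<forall>i<m. \<forall>k<n. (\<Sum>a\<in>{1..<d k ^ 2}. (t i k a / 2)^2) \<le> (c1 k)^2"
      proof (intro allI impI)
        fix i k assume i: "i < m" and k: "k < n"
        have "(\<Sum>a\<in>{1..<d k ^ 2}. (t i k a / 2)^2) = (\<Sum>a\<in>{1..<d k ^ 2}. (t i k a)^2) / 4"
          by (simp add: power_divide sum_divide_distrib)
        also have "\<dots> \<le> 2 * (1 - 1 / real (d k)) / 4" using LB[OF i k] by simp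
        also have "\<dots> = (c1 k)^2" unfolding c1_def using dpos[OF k] d2 k
          by (simp add: field_simps)
        finally show "(\<Sum>a\<in>{1..<d k ^ 2}. (t i k a / 2)^2) \<le> (c1 k)^2" .
      qed
    qed (use p0 p1 c10 in auto)
    show ?thesis unfolding tensor_moment_def
      by (rule moment_max[OF npos], insert each c10, auto intro: prod_nonneg)
  qed
  define c2 where "c2 = (\<lambda>k. sqrt ((real (d k)^2 - real (d k) + 2) / (2 * real (d k)^2)))"
  define g where "g = (\<lambda>k (a::nat). if a = 0 then 1 / real (d k) else (1::real) / 2)"
  have part2: "(tensor_moment n d 0 (can_corr_tensor n d L \<rho>) 2)^2
           \<le> tensor_moment n d 0 (can_corr_tensor n d L \<rho>) 3 * (\<Prod>k<n. c2 k)"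
  proof -
    have c20: "\<forall>k<n. c2 k \<ge> 0"
    proof (intro allI impI)
      fix k assume k: "k < n"
      have "real (d k) \<ge> 2" using d2 k by simp
      hence "real (d k)^2 - real (d k) + 2 \<ge> 0" by (simp add: power2_eq_square)
      thus "c2 k \<ge> 0" unfolding c2_def by simp
    qed
    have coef: "(\<Prod>k\<in>{k. k < n \<and> \<gamma> ! k \<noteq> 0}. real (d k)) / (2 ^ card {k. k < n \<and> \<gamma> ! k \<noteq> 0} * (\<Prod>k<n. real (d k)))
        = (\<Prod>k<n. g k (\<gamma> ! k))" for \<gamma> :: "nat list"
    proof -
      define S where "S = {k. k < n \<and> \<gamma> ! k \<noteq> 0}"
      define T where "T = {..<n} - S"
      have S: "S \<subseteq> {..<n}" "finite S" unfolding S_def by auto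
      have pd: "(\<Prod>k<n. real (d k)) = (\<Prod>k\<in>S. real (d k)) * (\<Prod>k\<in>T. real (d k))"
        unfolding T_def using prod.subset_diff[OF S(1) finite_lessThan, of "\<lambda>k. real (d k)"] by (simp add: mult.commute)
      have pg: "(\<Prod>k<n. g k (\<gamma> ! k)) = (\<Prod>k\<in>S. g k (\<gamma> ! k)) * (\<Prod>k\<in>T. g k (\<gamma> ! k))"
        unfolding T_def using prod.subset_diff[OF S(1) finite_lessThan, of "\<lambda>k. g k (\<gamma> ! k)"] by (simp add: mult.commute)
      have gS: "(\<Prod>k\<in>S. g k (\<gamma> ! k)) = (1/2) ^ card S"
        by (subst prod.cong[OF refl, of _ _ "\<lambda>_. 1/2"], auto simp: S_def g_def)
      have gT: "(\<Prod>k\<in>T. g k (\<gamma> ! k)) = (\<Prod>k\<in>T. 1 / real (d k))"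
        by (rule prod.cong, auto simp: T_def S_def g_def)
      have nzS: "(\<Prod>k\<in>S. real (d k)) \<noteq> 0" using dpos S(1) by (auto simp: prod_zero_iff[OF S(2)])
      have nzT: "(\<Prod>k\<in>T. real (d k)) \<noteq> 0" using dpos unfolding T_def by (auto simp: prod_zero_iff)
      show ?thesis unfolding S_def[symmetric] pd pg gS gT
        using nzS nzT by (simp add: prod_dividef power_one_over field_simps)
    qed
    have each: "(trace_pow_half (unfold_gram n d 0 (can_corr_tensor n d L \<rho>) k0) 2)^2
          \<le> trace_pow_half (unfold_gram n d 0 (can_corr_tensor n d L \<rho>) k0) 3 * (\<Prod>k<n. c2 k)" if k0: "k0 < n" for k0
    proof (rule tensor_unfold[OF k0, where f = "\<lambda>i k a. g k a * t i k a" and m = m and p = p])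
      show "\<forall>j<n. 0 \<le> d j ^ 2" by simp
      show "\<forall>\<gamma>. length \<gamma> = n \<longrightarrow> (\<forall>j<n. 0 \<le> \<gamma> ! j \<and> \<gamma> ! j < d j ^ 2) \<longrightarrow>
          can_corr_tensor n d L \<rho> \<gamma> = (\<Sum>i<m. p i * (\<Prod>k<n. g k (\<gamma> ! k) * t i k (\<gamma> ! k)))"
      proof (intro allI impI)
        fix \<gamma> :: "nat list" assume "length \<gamma> = n" and rng: "\<forall>j<n. 0 \<le> \<gamma> ! j \<and> \<gamma> ! j < d j ^ 2"
        have "can_corr_tensor n d L \<rho> \<gamma> = (\<Prod>k<n. g k (\<gamma> ! k)) * (\<Sum>i<m. p i * (\<Prod>k<n. t i k (\<gamma> ! k)))"
          unfolding can_corr_tensor_def Let_def coef t_def using ReT rng by auto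
        also have "\<dots> = (\<Sum>i<m. p i * (\<Prod>k<n. g k (\<gamma> ! k) * t i k (\<gamma> ! k)))"
          by (simp add: sum_distrib_left prod.distrib algebra_simps)
        finally show "can_corr_tensor n d L \<rho> \<gamma> = (\<Sum>i<m. p i * (\<Prod>k<n. g k (\<gamma> ! k) * t i k (\<gamma> ! k)))" .
      qed
      show "\<forall>i<m. \<forall>k<n. (\<Sum>a\<in>{0..<d k ^ 2}. (g k a * t i k a)^2) \<le> (c2 k)^2"
      proof (intro allI impI)
        fix i k assume i: "i < m" and k: "k < n"
        have dk: "0 < d k ^ 2" using d2 k by (metis not_numeral_le_zero gr0I zero_less_power)
        have "(\<Sum>a\<in>{0..<d k ^ 2}. (g k a * t i k a)^2) = (g k 0 * t i k 0)^2 + (\<Sum>a\<in>{Suc 0..<d k ^ 2}. (g k a * t i k a)^2)"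
          by (rule sum.atLeast_Suc_lessThan[OF dk])
        also have "(g k 0 * t i k 0)^2 = 1 / (real (d k))^2" using t0[OF i k] by (simp add: g_def power_divide)
        also have "(\<Sum>a\<in>{Suc 0..<d k ^ 2}. (g k a * t i k a)^2) = (\<Sum>a\<in>{1..<d k ^ 2}. (t i k a)^2) / 4"
          by (simp add: g_def power_divide sum_divide_distrib)
        also have "1 / (real (d k))^2 + (\<Sum>a\<in>{1..<d k ^ 2}. (t i k a)^2) / 4 \<le> 1 / (real (d k))^2 + 2 * (1 - 1 / real (d k)) / 4"
          using LB[OF i k] by simp
        also have "\<dots> = (c2 k)^2"
        proof -
          have "real (d k) \<ge> 2" using d2 k by simp
          hence nn: "(real (d k)^2 - real (d k) + 2) / (2 * real (d k)^2) \<ge> 0" by (simp add: power2_eq_square)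
          show ?thesis unfolding c2_def real_sqrt_pow2[OF nn] using dpos[OF k]
            by (simp add: field_simps power2_eq_square)
        qed
        finally show "(\<Sum>a\<in>{0..<d k ^ 2}. (g k a * t i k a)^2) \<le> (c2 k)^2" .
      qed
    qed (use p0 p1 c20 in auto)
    show ?thesis unfolding tensor_moment_def
      by (rule moment_max[OF npos], insert each c20, auto intro: prod_nonneg)
  qed
  show ?thesis using part1 part2 unfolding c1_def c2_def by blast
qed

end
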